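(* For every $\lambda>0$ there is $C(\lambda)<\infty$ such that the following holds. Let $\Lambda'\subset\Lambda$ be rectangles such that the Euclidean distance from $\Lambda'$ to $\mathbb{R}^2\setminus\Lambda$ is at least $2$, and let $f:\Omega\to[0,\infty)$ be a measurable $\Lambda'$-local function. Then $$\mu_{\Lambda'}(f)\le C(\lambda)^{\mathrm{Perimeter}(\Lambda)}\,\mu_\Lambda(f),$$ where $\mu_\Lambda$ may be any of $\mu^{\mathrm{per}}_{\Lambda,\lambda}$, $\mu^\rho_{\Lambda,\lambda}$ for some $\rho\in\Omega$, or an infinite-volume Gibbs measure at fugacity $\lambda$, and independently $\mu_{\Lambda'}$ may be any of $\mu^{\mathrm{per}}_{\Lambda',\lambda}$, $\mu^{\rho'}_{\Lambda',\lambda}$ for some $\rho'\in\Omega$, or an infinite-volume Gibbs measure at fugacity $\lambda$.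
   Context: Tiles: $T_{(x,y)}=[x-1,x+1]\times[y-1,y+1]$. $\Omega=\{\sigma\in\{0,1\}^{\mathbb{Z}^2}: \sigma(u)=\sigma(v)=1,u\ne v\Rightarrow\mathrm{int}(T_u)\cap\mathrm{int}(T_v)=\emptyset\}$. A rectangle is a closed axis-parallel rectangle with integer corner coordinates; $R_{K\times L,(x,y)}=[x,x+K]\times[y,y+L]$, with width $K$, height $L$, perimeter $2K+2L$. A face is a unit square $[a,a+1]\times[b,b+1]$, $a,b\in\mathbb{Z}$; it is vacant in $\sigma$ if it is contained in no tile of $\sigma$. For a rectangle $\Lambda$, $w_{\Lambda,\lambda}(\sigma)=\lambda^{-\frac14\#\{\text{vacant faces } f\subset\Lambda\}}$. $\Omega^{\mathrm{per}}_\Lambda=\{\sigma\in\Omega:\sigma(v)=\sigma(v+(\mathrm{Width}(\Lambda),0))=\sigma(v+(0,\mathrm{Height}(\Lambda)))\ \forall v\}$; for $\rho\in\Omega$, $\Omega^\rho_\Lambda=\{\sigma\in\Omega:\sigma=\rho\text{ on }\mathbb{Z}^2\setminus\mathrm{int}(\Lambda)\}$. For $*\in\{\mathrm{per}\}\cup\Omega$, $\mu^*_{\Lambda,\lambda}(\sigma)=w_{\Lambda,\lambda}(\sigma)/Z^*_{\Lambda,\lambda}$ on $\Omega^*_\Lambda$, $Z^*_{\Lambda,\lambda}=\sum_{\sigma\in\Omega^*_\Lambda}w_{\Lambda,\lambda}(\sigma)$. A Gibbs measure at fugacity $\lambda$ is a probability measure $\mu$ on $\Omega$ such that for every bounded $\Lambda\subset\mathbb{R}^2$,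 conditionally on $\sigma|_{\mathbb{Z}^2\setminus\mathrm{int}\Lambda}$ the law of $\sigma\sim\mu$ is the measure on $\Omega^\sigma_\Lambda$ proportional to $\lambda^{\#\{\text{tiles centered in }\mathrm{int}\Lambda\}}$. A function $f$ on $\Omega$ is $A$-local ($A\subset\mathbb{R}^2$) if $f(\sigma)$ depends only on the restriction of $\sigma$ to $A\cap\mathbb{Z}^2$. *)

theory Defs
  imports "HOL-Probability.Probability"
begin

type_synonym site = "int \<times> int"
type_synonym config = "site \<Rightarrow> bool"

definition pt :: "site \<Rightarrow> real \<times> real" where
  "pt v = (real_of_int (fst v), real_of_int (snd v))"

definition tile :: "site \<Rightarrow> (real \<times> real) set" where
  "tile u = {real_of_int (fst u) - 1 .. real_of_int (fst u) + 1} \<times>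
            {real_of_int (snd u) - 1 .. real_of_int (snd u) + 1}"

definition Omega :: "config set" where
  "Omega = {\<sigma>. \<forall>u v. \<sigma> u \<and> \<sigma> v \<and> u \<noteq> v \<longrightarrow> interior (tile u) \<inter> interior (tile v) = {}}"

text \<open>Rectangle R = (x, y, K, L) stands for [x,x+K] x [y,y+L]; widths and heights positive.\<close>
type_synonym rect = "int \<times> int \<times> int \<times> int"

definition is_rect :: "rect \<Rightarrow> bool" where
  "is_rect R = (case R of (x, y, K, L) \<Rightarrow> 0 < K \<and> 0 < L)"

definition rect_set :: "rect \<Rightarrow> (real \<times> real) set" where
  "rect_set R = (case R of (x, y, K, L) \<Rightarrow>
     {real_of_int x .. real_of_int (x + K)} \<times> {real_of_int y .. real_of_int (y + L)})"

definition width :: "rect \<Rightarrow> int" where "width R = fst (snd (snd R))"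
definition height :: "rect \<Rightarrow> int" where "height R = snd (snd (snd R))"
definition perimeter :: "rect \<Rightarrow> int" where "perimeter R = 2 * width R + 2 * height R"

definition face :: "site \<Rightarrow> (real \<times> real) set" where
  "face f = {real_of_int (fst f) .. real_of_int (fst f) + 1} \<times>
            {real_of_int (snd f) .. real_of_int (snd f) + 1}"

definition vacant :: "config \<Rightarrow> site \<Rightarrow> bool" where
  "vacant \<sigma> f = (\<not> (\<exists>u. \<sigma> u \<and> face f \<subseteq> tile u))"

definition weight :: "real \<Rightarrow> rect \<Rightarrow> config \<Rightarrow> real" where
  "weight lam R \<sigma> = lam powr (- (1/4) * real (card {f. face f \<subseteq> rect_set R \<and> vacant \<sigma> f}))"

definition Omega_per :: "rect \<Rightarrow> config set" where
  "Omega_per R = {\<sigma> \<in> Omega. \<forall>v. \<sigma> v = \<sigma> (fst v + width R, snd v) \<and> \<sigma> v = \<sigma> (fst v, snd v + height R)}"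

definition Omega_bc :: "(real \<times> real) set \<Rightarrow> config \<Rightarrow> config set" where
  "Omega_bc A \<rho> = {\<sigma> \<in> Omega. \<forall>v. pt v \<notin> interior A \<longrightarrow> \<sigma> v = \<rho> v}"

definition wmean :: "(config \<Rightarrow> real) \<Rightarrow> config set \<Rightarrow> (config \<Rightarrow> real) \<Rightarrow> real" where
  "wmean w S f = (\<Sum>\<sigma>\<in>S. w \<sigma> * f \<sigma>) / (\<Sum>\<sigma>\<in>S. w \<sigma>)"

definition per_mean :: "real \<Rightarrow> rect \<Rightarrow> (config \<Rightarrow> real) \<Rightarrow> real" where
  "per_mean lam R f = wmean (weight lam R) (Omega_per R) f"

definition bc_mean :: "real \<Rightarrow> rect \<Rightarrow> config \<Rightarrow> (config \<Rightarrow> real) \<Rightarrow> real" where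
  "bc_mean lam R \<rho> f = wmean (weight lam R) (Omega_bc (rect_set R) \<rho>) f"

definition cfg_space :: "config measure" where
  "cfg_space = PiM UNIV (\<lambda>_. count_space UNIV)"

definition spec :: "real \<Rightarrow> (real \<times> real) set \<Rightarrow> config \<Rightarrow> config set \<Rightarrow> real" where
  "spec lam A \<sigma> E = wmean (\<lambda>\<eta>. lam ^ card {v. \<eta> v \<and> pt v \<in> interior A})
                          (Omega_bc A \<sigma>) (indicator E)"

definition outside_event :: "(real \<times> real) set \<Rightarrow> config set \<Rightarrow> bool" where
  "outside_event A B = (B \<in> sets cfg_space \<and>
     (\<forall>\<sigma> \<tau>. (\<forall>v. pt v \<notin> interior A \<longrightarrow> \<sigma> v = \<tau> v) \<longrightarrow> (\<sigma> \<in> B \<longleftrightarrow> \<tau> \<in> B)))"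

definition gibbs :: "real \<Rightarrow> config measure \<Rightarrow> bool" where
  "gibbs lam \<mu> = (prob_space \<mu> \<and> sets \<mu> = sets cfg_space \<and> emeasure \<mu> Omega = 1 \<and>
     (\<forall>A. bounded A \<longrightarrow> (\<forall>E \<in> sets cfg_space. \<forall>B. outside_event A B \<longrightarrow>
        measure \<mu> (E \<inter> B) = (\<integral>\<sigma>. indicator B \<sigma> * spec lam A \<sigma> E \<partial>\<mu>))))"

definition is_local :: "(real \<times> real) set \<Rightarrow> (config \<Rightarrow> real) \<Rightarrow> bool" where
  "is_local A f = (\<forall>\<sigma>\<in>Omega. \<forall>\<tau>\<in>Omega. (\<forall>v. pt v \<in> A \<longrightarrow> \<sigma> v = \<tau> v) \<longrightarrow> f \<sigma> = f \<tau>)"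

definition admissible_means :: "real \<Rightarrow> rect \<Rightarrow> ((config \<Rightarrow> real) \<Rightarrow> real) set" where
  "admissible_means lam R =
     {per_mean lam R} \<union> {bc_mean lam R \<rho> | \<rho>. \<rho> \<in> Omega} \<union>
     {(\<lambda>f. \<integral>\<sigma>. f \<sigma> \<partial>\<mu>) | \<mu>. gibbs lam \<mu>}"

end

theory Submission
  imports Defs
begin


definition sbox :: "rect \<Rightarrow> site set" where
  "sbox R = (case R of (x,y,K,L) \<Rightarrow> {u. x \<le> fst u \<and> fst u \<le> x+K \<and> y \<le> snd u \<and> snd u \<le> y+L})"
definition inn :: "rect \<Rightarrow> site set" where
  "inn R = (case R of (x,y,K,L) \<Rightarrow> {u. x < fst u \<and> fst u < x+K \<and> y < snd u \<and> snd u < y+L})"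
definition near :: "site \<Rightarrow> site \<Rightarrow> bool" where
  "near u v \<longleftrightarrow> \<bar>fst u - fst v\<bar> \<le> 1 \<and> \<bar>snd u - snd v\<bar> \<le> 1"

lemma pt_in_rect: "pt v \<in> rect_set R \<longleftrightarrow> v \<in> sbox R"
  by (cases R; cases v) (auto simp: pt_def rect_set_def sbox_def)

lemma interior_rect: "interior (rect_set (x,y,K,L)) =
   {real_of_int x<..<real_of_int (x+K)} \<times> {real_of_int y<..<real_of_int (y+L)}"
  by (simp add: rect_set_def interior_Times)

lemma pt_in_interior: "pt v \<in> interior (rect_set R) \<longleftrightarrow> v \<in> inn R"
  by (cases R; cases v) (auto simp: pt_def interior_rect inn_def)

lemma interior_tile: "interior (tile u) =
  {real_of_int (fst u) - 1<..<real_of_int (fst u) + 1} \<times> {real_of_int (snd u) - 1<..<real_of_int (snd u) + 1}"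
  by (simp add: tile_def interior_Times)

lemma tiles_disjoint_iff: "interior (tile u) \<inter> interior (tile v) = {} \<longleftrightarrow> \<not> near u v"
proof
  assume h: "interior (tile u) \<inter> interior (tile v) = {}"
  show "\<not> near u v"
  proof
    assume n: "near u v"
    let ?p = "((real_of_int (fst u) + real_of_int (fst v))/2, (real_of_int (snd u) + real_of_int (snd v))/2)"
    have a: "\<bar>real_of_int (fst u) - real_of_int (fst v)\<bar> \<le> 1" "\<bar>real_of_int (snd u) - real_of_int (snd v)\<bar> \<le> 1"
      using n unfolding near_def by linarith+
    have "?p \<in> interior (tile u) \<inter> interior (tile v)"
      using a unfolding interior_tile by (auto simp: abs_le_iff)
    with h show False by blast
  qed
next
  assume "\<not> near u v"
  then have "\<bar>fst u - fst v\<bar> \<ge> 2 \<or> \<bar>snd u - snd v\<bar> \<ge> 2" unfolding near_def by auto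
  then show "interior (tile u) \<inter> interior (tile v) = {}"
  proof
    assume a: "\<bar>fst u - fst v\<bar> \<ge> 2"
    have b: "\<bar>real_of_int (fst u) - real_of_int (fst v)\<bar> \<ge> 2" using a by linarith
    show ?thesis unfolding interior_tile using b by (auto simp: abs_if split: if_splits)
  next
    assume a: "\<bar>snd u - snd v\<bar> \<ge> 2"
    have b: "\<bar>real_of_int (snd u) - real_of_int (snd v)\<bar> \<ge> 2" using a by linarith
    show ?thesis unfolding interior_tile using b by (auto simp: abs_if split: if_splits)
  qed
qed

lemma Omega_iff: "\<sigma> \<in> Omega \<longleftrightarrow> (\<forall>u v. \<sigma> u \<and> \<sigma> v \<and> u \<noteq> v \<longrightarrow> \<not> near u v)"
  unfolding Omega_def using tiles_disjoint_iff by auto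



definition corners :: "site \<Rightarrow> site set" where
  "corners F = {F, (fst F + 1, snd F), (fst F, snd F + 1), (fst F + 1, snd F + 1)}"

lemma face_sub_tile: "face F \<subseteq> tile u \<longleftrightarrow> u \<in> corners F"
proof -
  have "face F \<subseteq> tile u \<longleftrightarrow>
     (real_of_int (fst u) - 1 \<le> real_of_int (fst F) \<and> real_of_int (fst F) + 1 \<le> real_of_int (fst u) + 1) \<and>
     (real_of_int (snd u) - 1 \<le> real_of_int (snd F) \<and> real_of_int (snd F) + 1 \<le> real_of_int (snd u) + 1)"
    unfolding face_def tile_def times_subset_iff by auto
  also have "\<dots> \<longleftrightarrow> (fst u = fst F \<or> fst u = fst F + 1) \<and> (snd u = snd F \<or> snd u = snd F + 1)"
    by linarith
  also have "\<dots> \<longleftrightarrow> u \<in> corners F" by (cases u; cases F) (auto simp: corners_def)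
  finally show ?thesis .
qed

lemma vacant_iff: "vacant \<sigma> F \<longleftrightarrow> (\<forall>u\<in>corners F. \<not> \<sigma> u)"
  unfolding vacant_def face_sub_tile by blast

lemma face_sub_rect: "face F \<subseteq> rect_set (x,y,K,L) \<longleftrightarrow>
   x \<le> fst F \<and> fst F + 1 \<le> x + K \<and> y \<le> snd F \<and> snd F + 1 \<le> y + L"
proof -
  have "face F \<subseteq> rect_set (x,y,K,L) \<longleftrightarrow>
     (real_of_int x \<le> real_of_int (fst F) \<and> real_of_int (fst F) + 1 \<le> real_of_int x + real_of_int K) \<and>
     (real_of_int y \<le> real_of_int (snd F) \<and> real_of_int (snd F) + 1 \<le> real_of_int y + real_of_int L)"
    by (simp add: face_def rect_set_def times_subset_iff del: of_int_le_iff)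
  also have "\<dots> \<longleftrightarrow> x \<le> fst F \<and> fst F + 1 \<le> x + K \<and> y \<le> snd F \<and> snd F + 1 \<le> y + L"
    by linarith
  finally show ?thesis .
qed

lemma finite_box: "finite (sbox R)"
proof (cases R)
  case (fields x y K L)
  have "sbox R \<subseteq> {x..x+K} \<times> {y..y+L}" using fields by (auto simp: sbox_def)
  then show ?thesis by (rule finite_subset) auto
qed

lemma inn_sub_box: "inn R \<subseteq> sbox R"
  by (cases R) (auto simp: sbox_def inn_def)

lemma finite_inn: "finite (inn R)" using finite_subset[OF inn_sub_box finite_box] .

definition FR :: "rect \<Rightarrow> site set" where "FR R = {F. face F \<subseteq> rect_set R}"

lemma finite_FR: "finite (FR R)"
proof (cases R)
  case (fields x y K L)
  have "FR R \<subseteq> {x..x+K} \<times> {y..y+L}" using fields by (auto simp: FR_def face_sub_rect)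
  then show ?thesis by (rule finite_subset) auto
qed

definition FC :: "rect \<Rightarrow> site \<Rightarrow> site set" where "FC R u = {F \<in> FR R. u \<in> corners F}"

lemma corners_near: "u \<in> corners F \<Longrightarrow> v \<in> corners F \<Longrightarrow> near u v"
  by (auto simp: corners_def near_def)

lemma FC_inn: assumes "u \<in> inn R" shows "card (FC R u) = 4"
proof -
  obtain x y K L where R: "R = (x,y,K,L)" by (cases R)
  obtain a b where u: "u = (a,b)" by (cases u)
  have "FC R u = {(a-1,b-1),(a-1,b),(a,b-1),(a,b)}"
    using assms unfolding R u FC_def FR_def
    by (auto simp: face_sub_rect corners_def inn_def)
  then show ?thesis by simp
qed

lemma corner_in_box: "F \<in> FR R \<Longrightarrow> u \<in> corners F \<Longrightarrow> u \<in> sbox R"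
  by (cases R) (auto simp: FR_def face_sub_rect corners_def sbox_def)

definition tcount :: "rect \<Rightarrow> config \<Rightarrow> nat" where
  "tcount R \<sigma> = card {v. \<sigma> v \<and> v \<in> inn R}"

definition K0 :: "rect \<Rightarrow> config \<Rightarrow> nat" where
  "K0 R \<rho> = card (\<Union>u\<in>{u\<in>sbox R - inn R. \<rho> u}. FC R u)"

lemma vac_identity:
  assumes "\<sigma> \<in> Omega" and agree: "\<forall>u. u \<notin> inn R \<longrightarrow> \<sigma> u = \<rho> u"
  shows "card {F. face F \<subseteq> rect_set R \<and> vacant \<sigma> F} + 4 * tcount R \<sigma> + K0 R \<rho> = card (FR R)"
proof -
  let ?Ui = "{u\<in>inn R. \<sigma> u}" and ?Ub = "{u\<in>sbox R - inn R. \<rho> u}"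
  have disj: "FC R u \<inter> FC R v = {}" if "\<sigma> u" "\<sigma> v" "u \<noteq> v" for u v
    using that assms(1) corners_near unfolding Omega_iff FC_def by blast
  have fin: "finite ?Ui" "finite ?Ub" using finite_inn finite_box by auto
  have finFC: "finite (FC R u)" for u using finite_FR[of R] by (auto simp: FC_def)
  have c1: "card (\<Union>u\<in>?Ui. FC R u) = (\<Sum>u\<in>?Ui. card (FC R u))"
    by (rule card_UN_disjoint) (use fin finFC disj in auto)
  also have "\<dots> = 4 * card ?Ui" using FC_inn by simp
  finally have c1: "card (\<Union>u\<in>?Ui. FC R u) = 4 * tcount R \<sigma>"
    unfolding tcount_def by (metis (no_types, lifting) Collect_cong)
  have Ub: "?Ub = {u\<in>sbox R - inn R. \<sigma> u}" using agree by auto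
  have cov: "{F. face F \<subseteq> rect_set R \<and> \<not> vacant \<sigma> F} = (\<Union>u\<in>?Ui. FC R u) \<union> (\<Union>u\<in>?Ub. FC R u)"
  proof (intro equalityI subsetI)
    fix F assume "F \<in> {F. face F \<subseteq> rect_set R \<and> \<not> vacant \<sigma> F}"
    then obtain u where F: "F \<in> FR R" "u \<in> corners F" "\<sigma> u" by (auto simp: vacant_iff FR_def)
    then have "u \<in> sbox R" using corner_in_box by blast
    then show "F \<in> (\<Union>u\<in>?Ui. FC R u) \<union> (\<Union>u\<in>?Ub. FC R u)"
    proof (cases "u \<in> inn R")
      case True
      then have "u \<in> ?Ui" "F \<in> FC R u" using F by (auto simp: FC_def)
      then show ?thesis by blast
    next
      case False
      then have "u \<in> {u\<in>sbox R - inn R. \<sigma> u}" "F \<in> FC R u" using F \<open>u \<in> sbox R\<close> by (auto simp: FC_def)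
      then show ?thesis unfolding Ub by blast
    qed
  next
    fix F assume "F \<in> (\<Union>u\<in>?Ui. FC R u) \<union> (\<Union>u\<in>?Ub. FC R u)"
    then show "F \<in> {F. face F \<subseteq> rect_set R \<and> \<not> vacant \<sigma> F}"
      unfolding Ub by (auto simp: vacant_iff FC_def FR_def)
  qed
  have dj2: "(\<Union>u\<in>?Ui. FC R u) \<inter> (\<Union>u\<in>?Ub. FC R u) = {}"
  proof -
    { fix F u v assume a: "u \<in> ?Ui" "v \<in> {u\<in>sbox R - inn R. \<sigma> u}" "F \<in> FC R u" "F \<in> FC R v"
      then have "u \<noteq> v" by auto
      then have False using disj[of u v] a by auto }
    then show ?thesis unfolding Ub by blast
  qed
  have "card {F. face F \<subseteq> rect_set R \<and> \<not> vacant \<sigma> F} = 4 * tcount R \<sigma> + K0 R \<rho>"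
    unfolding cov K0_def c1[symmetric]
    by (rule card_Un_disjoint) (use fin finFC dj2 in auto)
  moreover have "card (FR R) = card {F. face F \<subseteq> rect_set R \<and> vacant \<sigma> F} +
       card {F. face F \<subseteq> rect_set R \<and> \<not> vacant \<sigma> F}"
  proof -
    have "FR R = {F. face F \<subseteq> rect_set R \<and> vacant \<sigma> F} \<union> {F. face F \<subseteq> rect_set R \<and> \<not> vacant \<sigma> F}"
      by (auto simp: FR_def)
    moreover have "finite {F. face F \<subseteq> rect_set R \<and> vacant \<sigma> F}"
      "finite {F. face F \<subseteq> rect_set R \<and> \<not> vacant \<sigma> F}"
      using finite_FR[of R] by (auto simp: FR_def elim: finite_subset[rotated])
    ultimately show ?thesis by (simp add: card_Un_disjoint disjoint_iff)
  qed
  ultimately show ?thesis by linarith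
qed



lemma wmean_scale:
  assumes "c \<noteq> 0" "\<And>x. x \<in> S \<Longrightarrow> w x = c * w' x"
  shows "wmean w S f = wmean w' S f"
proof -
  have "(\<Sum>x\<in>S. w x * f x) = c * (\<Sum>x\<in>S. w' x * f x)" "(\<Sum>x\<in>S. w x) = c * (\<Sum>x\<in>S. w' x)"
    using assms(2) by (simp_all add: sum_distrib_left mult.assoc)
  then show ?thesis using assms(1) unfolding wmean_def by simp
qed

lemma wmean_cong:
  assumes "\<And>x. x \<in> S \<Longrightarrow> w x = w' x" "\<And>x. x \<in> S \<Longrightarrow> f x = f' x"
  shows "wmean w S f = wmean w' S f'"
  unfolding wmean_def using assms by (metis (no_types, lifting) sum.cong)

lemma fiber_sum:
  fixes h :: "'b \<Rightarrow> real"
  assumes "finite A" "finite B" "\<Phi> ` A \<subseteq> B" "\<And>b. b \<in> B \<Longrightarrow> h b \<ge> 0"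
    "\<And>b. b \<in> B \<Longrightarrow> card {a\<in>A. \<Phi> a = b} \<le> N"
  shows "(\<Sum>a\<in>A. h (\<Phi> a)) \<le> real N * (\<Sum>b\<in>B. h b)"
proof -
  have "(\<Sum>a\<in>A. h (\<Phi> a)) = (\<Sum>b\<in>\<Phi> ` A. \<Sum>a\<in>{a\<in>A. \<Phi> a = b}. h (\<Phi> a))"
    by (rule sum.image_gen[OF assms(1)])
  also have "\<dots> = (\<Sum>b\<in>\<Phi> ` A. real (card {a\<in>A. \<Phi> a = b}) * h b)"
    by (rule sum.cong) auto
  also have "\<dots> \<le> (\<Sum>b\<in>\<Phi> ` A. real N * h b)"
    by (rule sum_mono) (use assms in \<open>auto intro!: mult_right_mono\<close>)
  also have "\<dots> \<le> (\<Sum>b\<in>B. real N * h b)"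
    by (rule sum_mono2) (use assms in auto)
  finally show ?thesis by (simp add: sum_distrib_left)
qed

lemma pow_bound:
  fixes lam :: real
  assumes "lam > 0" "a \<le> b + d" "b \<le> a + d"
  shows "(min lam (1/lam))^d * lam^a \<le> lam^b"
proof (cases "lam \<ge> 1")
  case True
  have "lam^a \<le> lam^(b+d)" using assms True by (intro power_increasing) auto
  then have "lam^a \<le> lam^b * lam^d" by (simp add: power_add)
  moreover have "min lam (1/lam) = 1/lam"
  proof -
    have "1/lam \<le> 1" using True by simp
    then show ?thesis using True by (intro min_absorb2) linarith
  qed
  ultimately show ?thesis using assms(1)
    by (simp add: power_one_over divide_le_eq mult.commute)
next
  case False
  have "lam^(a+d) \<le> lam^b" using assms False by (intro power_decreasing) auto
  moreover have "min lam (1/lam) = lam"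
  proof -
    have "1 \<le> 1/lam" using False assms(1) by simp
    then show ?thesis using False by (intro min_absorb1) linarith
  qed
  ultimately show ?thesis by (simp add: power_add mult.commute)
qed

definition tw :: "real \<Rightarrow> rect \<Rightarrow> config \<Rightarrow> real" where
  "tw lam R \<eta> = lam ^ tcount R \<eta>"

definition tmean :: "real \<Rightarrow> rect \<Rightarrow> config \<Rightarrow> (config \<Rightarrow> real) \<Rightarrow> real" where
  "tmean lam R \<rho> f = wmean (tw lam R) (Omega_bc (rect_set R) \<rho>) f"

lemma Omega_bc_iff: "\<sigma> \<in> Omega_bc (rect_set R) \<rho> \<longleftrightarrow> \<sigma> \<in> Omega \<and> (\<forall>v. v \<notin> inn R \<longrightarrow> \<sigma> v = \<rho> v)"
  unfolding Omega_bc_def pt_in_interior by auto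

lemma spec_eq: "spec lam (rect_set R) \<sigma> E = tmean lam R \<sigma> (indicator E)"
  unfolding spec_def tmean_def tw_def tcount_def pt_in_interior ..

lemma finite_Omega_bc: "finite (Omega_bc (rect_set R) \<rho>)"
proof -
  have "Omega_bc (rect_set R) \<rho> \<subseteq> (\<lambda>B u. if u \<in> inn R then u \<in> B else \<rho> u) ` Pow (inn R)"
  proof
    fix \<sigma> assume "\<sigma> \<in> Omega_bc (rect_set R) \<rho>"
    then have "\<sigma> = (\<lambda>u. if u \<in> inn R then u \<in> {u\<in>inn R. \<sigma> u} else \<rho> u)"
      unfolding Omega_bc_iff by auto
    then show "\<sigma> \<in> (\<lambda>B u. if u \<in> inn R then u \<in> B else \<rho> u) ` Pow (inn R)" by blast
  qed
  then show ?thesis by (rule finite_subset) (use finite_inn in auto)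
qed

lemma rho_in_Omega_bc: "\<rho> \<in> Omega \<Longrightarrow> \<rho> \<in> Omega_bc A \<rho>"
  unfolding Omega_bc_def by auto

lemma bc_mean_eq:
  assumes "lam > 0"
  shows "bc_mean lam R \<rho> f = tmean lam R \<rho> f"
  unfolding bc_mean_def tmean_def
proof (rule wmean_scale)
  let ?c = "lam powr (- (1/4) * (real (card (FR R)) - real (K0 R \<rho>)))"
  show "?c \<noteq> 0" using assms by simp
  fix \<sigma> assume s: "\<sigma> \<in> Omega_bc (rect_set R) \<rho>"
  then have "card {F. face F \<subseteq> rect_set R \<and> vacant \<sigma> F} + 4 * tcount R \<sigma> + K0 R \<rho> = card (FR R)"
    unfolding Omega_bc_iff by (intro vac_identity) auto
  then have e: "real (card {F. face F \<subseteq> rect_set R \<and> vacant \<sigma> F}) =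
       (real (card (FR R)) - real (K0 R \<rho>)) - 4 * real (tcount R \<sigma>)" by linarith
  have "weight lam R \<sigma> = lam powr (- (1/4) * (real (card (FR R)) - real (K0 R \<rho>)) + real (tcount R \<sigma>))"
    unfolding weight_def e by (simp add: algebra_simps)
  also have "\<dots> = ?c * tw lam R \<sigma>"
    unfolding powr_add tw_def using assms by (simp add: powr_realpow)
  finally show "weight lam R \<sigma> = ?c * tw lam R \<sigma>" .
qed



definition core :: "rect \<Rightarrow> site set" where
  "core R = (case R of (x,y,K,L) \<Rightarrow> {u. x+2 \<le> fst u \<and> fst u \<le> x+K-2 \<and> y+2 \<le> snd u \<and> snd u \<le> y+L-2})"
definition expd :: "rect \<Rightarrow> site set" where
  "expd R = (case R of (x,y,K,L) \<Rightarrow> {u. x-1 \<le> fst u \<and> fst u \<le> x+K+1 \<and> y-1 \<le> snd u \<and> snd u \<le> y+L+1})"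
definition ring :: "rect \<Rightarrow> site set" where "ring R = expd R - core R"

definition cnt :: "config \<Rightarrow> site set \<Rightarrow> nat" where "cnt \<eta> A = card {v\<in>A. \<eta> v}"

lemma tcount_cnt: "tcount R \<eta> = cnt \<eta> (inn R)"
  unfolding tcount_def cnt_def by (metis (no_types, lifting) Collect_cong)

lemma cnt_split: "finite A \<Longrightarrow> cnt \<eta> A = cnt \<eta> (A \<inter> C) + cnt \<eta> (A - C)"
  unfolding cnt_def
  by (subst card_Un_disjoint[symmetric]) (auto intro: arg_cong[where f=card])

lemma cnt_cong: "(\<And>v. v \<in> A \<Longrightarrow> \<eta> v = \<eta>' v) \<Longrightarrow> cnt \<eta> A = cnt \<eta>' A"
  unfolding cnt_def by (metis (no_types, lifting) Collect_cong)

lemma cnt_le: "finite A \<Longrightarrow> cnt \<eta> A \<le> card A"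
  unfolding cnt_def by (rule card_mono) auto

lemma cnt_agree: assumes "finite A" "finite Z" "\<And>v. v \<in> A \<Longrightarrow> v \<notin> Z \<Longrightarrow> \<eta> v = \<eta>' v"
  shows "cnt \<eta> A \<le> cnt \<eta>' A + card Z"
proof -
  have "{v\<in>A. \<eta> v} \<subseteq> {v\<in>A. \<eta>' v} \<union> Z" using assms(3) by auto
  then have "card {v\<in>A. \<eta> v} \<le> card ({v\<in>A. \<eta>' v} \<union> Z)"
    by (rule card_mono[rotated]) (use assms in auto)
  also have "\<dots> \<le> card {v\<in>A. \<eta>' v} + card Z" by (rule card_Un_le)
  finally show ?thesis unfolding cnt_def .
qed

lemma finite_expd: "finite (expd R)"
proof (cases R)
  case (fields x y K L)
  have "expd R \<subseteq> {x-1..x+K+1} \<times> {y-1..y+L+1}" using fields by (auto simp: expd_def)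
  then show ?thesis by (rule finite_subset) auto
qed

lemma finite_ring: "finite (ring R)" unfolding ring_def using finite_expd by auto

section \<open>The swap\<close>

definition sw1 :: "rect \<Rightarrow> config \<Rightarrow> config \<Rightarrow> config" where
  "sw1 R' \<sigma> \<tau> = (\<lambda>u. if u \<in> sbox R' then \<tau> u else if u \<in> expd R' then False else \<sigma> u)"
definition sw2 :: "rect \<Rightarrow> config \<Rightarrow> config \<Rightarrow> config" where
  "sw2 R' \<sigma> \<tau> = (\<lambda>u. if u \<in> core R' then \<sigma> u else if u \<in> inn R' then False else \<tau> u)"

definition margin :: "rect \<Rightarrow> rect \<Rightarrow> bool" where
  "margin R R' = (case R of (x,y,K,L) \<Rightarrow> case R' of (x',y',K',L') \<Rightarrow>
      x+2 \<le> x' \<and> x'+K'+2 \<le> x+K \<and> y+2 \<le> y' \<and> y'+L'+2 \<le> y+L)"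

lemma core_inn: "core R' \<subseteq> inn R'"
  by (cases R') (auto simp: core_def inn_def)
lemma sbox_expd: "sbox R' \<subseteq> expd R'"
  by (cases R') (auto simp: sbox_def expd_def)
lemma expd_inn: "margin R R' \<Longrightarrow> expd R' \<subseteq> inn R"
  by (cases R; cases R') (auto simp: expd_def inn_def margin_def)
lemma near_sbox: "near u w \<Longrightarrow> u \<in> sbox R' \<Longrightarrow> w \<in> expd R'"
  by (cases R') (auto simp: near_def sbox_def expd_def)
lemma near_core: "near u w \<Longrightarrow> u \<in> core R' \<Longrightarrow> w \<in> inn R'"
  by (cases R') (auto simp: near_def core_def inn_def)
lemma near_sym: "near u w \<Longrightarrow> near w u"
  by (auto simp: near_def abs_minus_commute)

lemma sw1_in:
  assumes m: "margin R R'" and s: "\<sigma> \<in> Omega_bc (rect_set R) \<rho>1" and t: "\<tau> \<in> Omega"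
  shows "sw1 R' \<sigma> \<tau> \<in> Omega_bc (rect_set R) \<rho>1"
proof -
  have so: "\<sigma> \<in> Omega" using s by (simp add: Omega_bc_iff)
  have "sw1 R' \<sigma> \<tau> \<in> Omega"
    unfolding Omega_iff
  proof (intro allI impI notI)
    fix u w assume a: "sw1 R' \<sigma> \<tau> u \<and> sw1 R' \<sigma> \<tau> w \<and> u \<noteq> w" and n: "near u w"
    have n': "near w u" using n by (rule near_sym)
    show False
    proof (cases "u \<in> sbox R'")
      case True
      then have w: "w \<in> expd R'" using n near_sbox by blast
      show False
      proof (cases "w \<in> sbox R'")
        case True
        then have "\<tau> u \<and> \<tau> w" using a \<open>u \<in> sbox R'\<close> unfolding sw1_def by auto
        then show False using a t n Omega_iff by metis
      next
        case False then show False using a w unfolding sw1_def by auto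
      qed
    next
      case False
      then have u: "u \<notin> expd R'" "\<sigma> u" using a unfolding sw1_def by (auto split: if_splits)
      have "w \<notin> sbox R'" using near_sbox[OF n'] u by blast
      then have "w \<notin> expd R'" "\<sigma> w" using a unfolding sw1_def by (auto split: if_splits)
      then show False using u a so n unfolding Omega_iff by blast
    qed
  qed
  moreover have "\<forall>v. v \<notin> inn R \<longrightarrow> sw1 R' \<sigma> \<tau> v = \<rho>1 v"
    using s expd_inn[OF m] sbox_expd[of R'] unfolding Omega_bc_iff sw1_def by auto
  ultimately show ?thesis unfolding Omega_bc_iff by blast
qed

lemma sw2_in:
  assumes s: "\<sigma> \<in> Omega" and t: "\<tau> \<in> Omega_bc (rect_set R') \<rho>2"
  shows "sw2 R' \<sigma> \<tau> \<in> Omega_bc (rect_set R') \<rho>2"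
proof -
  have to: "\<tau> \<in> Omega" using t by (simp add: Omega_bc_iff)
  have "sw2 R' \<sigma> \<tau> \<in> Omega"
    unfolding Omega_iff
  proof (intro allI impI notI)
    fix u w assume a: "sw2 R' \<sigma> \<tau> u \<and> sw2 R' \<sigma> \<tau> w \<and> u \<noteq> w" and n: "near u w"
    have n': "near w u" using n by (rule near_sym)
    show False
    proof (cases "u \<in> core R'")
      case True
      then have w: "w \<in> inn R'" using n near_core by blast
      show False
      proof (cases "w \<in> core R'")
        case True
        then have "\<sigma> u \<and> \<sigma> w" using a \<open>u \<in> core R'\<close> unfolding sw2_def by auto
        then show False using a s n Omega_iff by metis
      next
        case False then show False using a w unfolding sw2_def by auto
      qed
    next
      case False
      then have u: "u \<notin> inn R'" "\<tau> u" using a unfolding sw2_def by (auto split: if_splits)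
      have "w \<notin> core R'" using near_core[OF n'] u by blast
      then have "w \<notin> inn R'" "\<tau> w" using a unfolding sw2_def by (auto split: if_splits)
      then show False using u a to n unfolding Omega_iff by blast
    qed
  qed
  moreover have "\<forall>v. v \<notin> inn R' \<longrightarrow> sw2 R' \<sigma> \<tau> v = \<rho>2 v"
    using t core_inn[of R'] unfolding Omega_bc_iff sw2_def by auto
  ultimately show ?thesis unfolding Omega_bc_iff by blast
qed

lemma sw1_out: "v \<notin> expd R' \<Longrightarrow> sw1 R' \<sigma> \<tau> v = \<sigma> v"
proof -
  assume "v \<notin> expd R'"
  moreover then have "v \<notin> sbox R'" using sbox_expd[of R'] by blast
  ultimately show ?thesis unfolding sw1_def by simp
qed

lemma sw1_box: "v \<in> sbox R' \<Longrightarrow> sw1 R' \<sigma> \<tau> v = \<tau> v"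
  unfolding sw1_def by simp

lemma core_sbox: "core R' \<subseteq> sbox R'" using core_inn inn_sub_box by blast

lemma count_bound:
  assumes m: "margin R R'"
  shows "tcount R \<sigma> + tcount R' \<tau> \<le> tcount R (sw1 R' \<sigma> \<tau>) + tcount R' (sw2 R' \<sigma> \<tau>) + 2 * card (ring R')"
    and "tcount R (sw1 R' \<sigma> \<tau>) + tcount R' (sw2 R' \<sigma> \<tau>) \<le> tcount R \<sigma> + tcount R' \<tau> + 2 * card (ring R')"
proof -
  let ?C = "core R'" and ?s1 = "sw1 R' \<sigma> \<tau>" and ?s2 = "sw2 R' \<sigma> \<tau>"
  have ci: "inn R \<inter> ?C = ?C" using core_inn[of R'] expd_inn[OF m] inn_sub_box[of R'] sbox_expd[of R'] by blast
  have ci': "inn R' \<inter> ?C = ?C" using core_inn[of R'] by blast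
  have t1: "tcount R \<eta> = cnt \<eta> ?C + cnt \<eta> (inn R - ?C)" for \<eta>
    unfolding tcount_cnt using cnt_split[OF finite_inn, of \<eta> R ?C] ci by simp
  have t2: "tcount R' \<eta> = cnt \<eta> ?C + cnt \<eta> (inn R' - ?C)" for \<eta>
    unfolding tcount_cnt using cnt_split[OF finite_inn, of \<eta> R' ?C] ci' by simp
  have e1: "cnt ?s1 ?C = cnt \<tau> ?C" by (rule cnt_cong, rule sw1_box) (use core_sbox[of R'] in blast)
  have e2: "cnt ?s2 ?C = cnt \<sigma> ?C" by (rule cnt_cong) (auto simp: sw2_def)
  have e3: "cnt ?s2 (inn R' - ?C) = 0" unfolding cnt_def by (auto simp: sw2_def)
  have fa: "finite (inn R - ?C)" using finite_inn by auto
  have ag: "sw1 R' \<sigma> \<tau> v = \<sigma> v" if "v \<in> inn R - ?C" "v \<notin> ring R'" for v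
  proof -
    have "v \<notin> expd R'" using that unfolding ring_def by blast
    then show ?thesis by (rule sw1_out)
  qed
  have a1: "cnt \<sigma> (inn R - ?C) \<le> cnt ?s1 (inn R - ?C) + card (ring R')"
    by (rule cnt_agree[OF fa finite_ring]) (rule ag[symmetric], assumption+)
  have a2: "cnt ?s1 (inn R - ?C) \<le> cnt \<sigma> (inn R - ?C) + card (ring R')"
    by (rule cnt_agree[OF fa finite_ring]) (rule ag, assumption+)
  have "inn R' - ?C \<subseteq> ring R'" unfolding ring_def using inn_sub_box[of R'] sbox_expd[of R'] by blast
  then have b: "cnt \<tau> (inn R' - ?C) \<le> card (ring R')"
  proof -
    have "cnt \<tau> (inn R' - ?C) \<le> card (inn R' - ?C)" using finite_inn[of R'] by (intro cnt_le) auto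
    also have "\<dots> \<le> card (ring R')" by (rule card_mono[OF finite_ring]) fact
    finally show ?thesis .
  qed
  show "tcount R \<sigma> + tcount R' \<tau> \<le> tcount R ?s1 + tcount R' ?s2 + 2 * card (ring R')"
    unfolding t1 t2 e1 e2 e3 using a1 b by linarith
  show "tcount R ?s1 + tcount R' ?s2 \<le> tcount R \<sigma> + tcount R' \<tau> + 2 * card (ring R')"
    unfolding t1 t2 e1 e2 e3 using a2 by linarith
qed

lemma fiber_card:
  assumes m: "margin R R'"
  shows "card {p \<in> Omega_bc (rect_set R) \<rho>1 \<times> Omega_bc (rect_set R') \<rho>2.
            (sw1 R' (fst p) (snd p), sw2 R' (fst p) (snd p)) = q} \<le> 2 ^ card (ring R')"
proof -
  let ?F = "{p \<in> Omega_bc (rect_set R) \<rho>1 \<times> Omega_bc (rect_set R') \<rho>2.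
            (sw1 R' (fst p) (snd p), sw2 R' (fst p) (snd p)) = q}"
  let ?g = "\<lambda>p. {u \<in> ring R'. fst p u}"
  have "inj_on ?g ?F"
  proof (rule inj_onI)
    fix p p' assume p: "p \<in> ?F" and p': "p' \<in> ?F" and g: "?g p = ?g p'"
    obtain \<sigma> \<tau> where pp: "p = (\<sigma>, \<tau>)" by (cases p)
    obtain \<sigma>' \<tau>' where pp': "p' = (\<sigma>', \<tau>')" by (cases p')
    have s1: "sw1 R' \<sigma> \<tau> = sw1 R' \<sigma>' \<tau>'" and s2: "sw2 R' \<sigma> \<tau> = sw2 R' \<sigma>' \<tau>'"
      using p p' unfolding pp pp' by auto
    have bc: "\<forall>v. v \<notin> inn R' \<longrightarrow> \<tau> v = \<rho>2 v" "\<forall>v. v \<notin> inn R' \<longrightarrow> \<tau>' v = \<rho>2 v"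
    proof -
      have "\<tau> \<in> Omega_bc (rect_set R') \<rho>2" "\<tau>' \<in> Omega_bc (rect_set R') \<rho>2" using p p' pp pp' by auto
      then show "\<forall>v. v \<notin> inn R' \<longrightarrow> \<tau> v = \<rho>2 v" "\<forall>v. v \<notin> inn R' \<longrightarrow> \<tau>' v = \<rho>2 v"
        unfolding Omega_bc_iff by blast+
    qed
    have tt: "\<tau> = \<tau>'"
    proof
      fix u show "\<tau> u = \<tau>' u"
      proof (cases "u \<in> sbox R'")
        case True then show ?thesis using fun_cong[OF s1, of u] by (simp add: sw1_def)
      next
        case False then show ?thesis using bc inn_sub_box by blast
      qed
    qed
    have ss: "\<sigma> = \<sigma>'"
    proof
      fix u show "\<sigma> u = \<sigma>' u"
      proof (cases "u \<in> core R'")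
        case True then show ?thesis using fun_cong[OF s2, of u] by (simp add: sw2_def)
      next
        case False
        show ?thesis
        proof (cases "u \<in> expd R'")
          case True then have "u \<in> ring R'" using False by (simp add: ring_def)
          then show ?thesis using g unfolding pp pp' by auto
        next
          case False
          then show ?thesis using fun_cong[OF s1, of u] sw1_out[OF False, of \<sigma> \<tau>] sw1_out[OF False, of \<sigma>' \<tau>'] by simp
        qed
      qed
    qed
    show "p = p'" using tt ss pp pp' by simp
  qed
  then have "card ?F = card (?g ` ?F)" by (rule card_image[symmetric])
  also have "\<dots> \<le> card (Pow (ring R'))" by (rule card_mono) (use finite_ring in auto)
  also have "\<dots> = 2 ^ card (ring R')" using finite_ring by (simp add: card_Pow)
  finally show ?thesis .
qed



lemma tw_pos: "lam > 0 \<Longrightarrow> tw lam R \<eta> > 0" unfolding tw_def by simp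

lemma pair_main:
  fixes lam :: real
  assumes lam: "lam > 0" and m: "margin R R'" and r1: "\<rho>1 \<in> Omega" and r2: "\<rho>2 \<in> Omega"
    and loc: "is_local (rect_set R') f" and fpos: "\<forall>\<sigma>\<in>Omega. f \<sigma> \<ge> 0"
  shows "((min lam (1/lam))^2 / 2) ^ card (ring R') * tmean lam R' \<rho>2 f \<le> tmean lam R \<rho>1 f"
proof -
  define S1 where "S1 = Omega_bc (rect_set R) \<rho>1"
  define S2 where "S2 = Omega_bc (rect_set R') \<rho>2"
  define q where "q = min lam (1/lam)"
  define r where "r = card (ring R')"
  define w1 where "w1 = tw lam R"
  define w2 where "w2 = tw lam R'"
  define \<Phi> where "\<Phi> = (\<lambda>p::config \<times> config. (sw1 R' (fst p) (snd p), sw2 R' (fst p) (snd p)))"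
  define h where "h = (\<lambda>p::config \<times> config. w1 (fst p) * w2 (snd p) * f (fst p))"
  have qpos: "q > 0" using lam by (simp add: q_def)
  have fin: "finite S1" "finite S2" unfolding S1_def S2_def by (rule finite_Omega_bc)+
  have ne: "\<rho>1 \<in> S1" "\<rho>2 \<in> S2" unfolding S1_def S2_def using r1 r2 by (simp_all add: rho_in_Omega_bc)
  have wpos: "w1 \<sigma> > 0" "w2 \<sigma> > 0" for \<sigma> unfolding w1_def w2_def using lam by (simp_all add: tw_pos)
  have S1O: "\<sigma> \<in> Omega" if "\<sigma> \<in> S1" for \<sigma> using that unfolding S1_def Omega_bc_iff by simp
  have S2O: "\<sigma> \<in> Omega" if "\<sigma> \<in> S2" for \<sigma> using that unfolding S2_def Omega_bc_iff by simp
  define W1 where "W1 = (\<Sum>\<sigma>\<in>S1. w1 \<sigma>)"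
  define W2 where "W2 = (\<Sum>\<sigma>\<in>S2. w2 \<sigma>)"
  define N1 where "N1 = (\<Sum>\<sigma>\<in>S1. w1 \<sigma> * f \<sigma>)"
  define N2 where "N2 = (\<Sum>\<sigma>\<in>S2. w2 \<sigma> * f \<sigma>)"
  have W1pos: "W1 > 0" unfolding W1_def by (rule sum_pos2[OF fin(1) ne(1)]) (auto intro: less_imp_le wpos)
  have W2pos: "W2 > 0" unfolding W2_def by (rule sum_pos2[OF fin(2) ne(2)]) (auto intro: less_imp_le wpos)
  have finP: "finite (S1 \<times> S2)" using fin by simp
  have PhiS: "\<Phi> ` (S1 \<times> S2) \<subseteq> S1 \<times> S2"
  proof
    fix z assume "z \<in> \<Phi> ` (S1 \<times> S2)"
    then obtain \<sigma> \<tau> where z: "z = \<Phi> (\<sigma>, \<tau>)" "\<sigma> \<in> S1" "\<tau> \<in> S2" by auto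
    have "sw1 R' \<sigma> \<tau> \<in> S1" unfolding S1_def by (rule sw1_in[OF m]) (use z S2O in \<open>auto simp: S1_def\<close>)
    moreover have "sw2 R' \<sigma> \<tau> \<in> S2" unfolding S2_def by (rule sw2_in) (use z S1O in \<open>auto simp: S2_def\<close>)
    ultimately show "z \<in> S1 \<times> S2" using z by (simp add: \<Phi>_def)
  qed
  have key: "q^(2*r) * (w1 (fst p) * w2 (snd p) * f (snd p)) \<le> h (\<Phi> p)" if p: "p \<in> S1 \<times> S2" for p
  proof -
    obtain \<sigma> \<tau> where pp: "p = (\<sigma>, \<tau>)" by (cases p)
    have s: "\<sigma> \<in> S1" "\<tau> \<in> S2" using p pp by auto
    have s1: "sw1 R' \<sigma> \<tau> \<in> S1" unfolding S1_def by (rule sw1_in[OF m]) (use s S2O in \<open>auto simp: S1_def\<close>)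
    have feq: "f (sw1 R' \<sigma> \<tau>) = f \<tau>"
    proof -
      have "\<forall>v. pt v \<in> rect_set R' \<longrightarrow> sw1 R' \<sigma> \<tau> v = \<tau> v" by (simp add: pt_in_rect sw1_box)
      then show ?thesis using loc S1O[OF s1] S2O[OF s(2)] unfolding is_local_def by blast
    qed
    have fnn: "f \<tau> \<ge> 0" using fpos S2O[OF s(2)] by blast
    have pb: "q^(2*r) * lam^(tcount R \<sigma> + tcount R' \<tau>) \<le> lam^(tcount R (sw1 R' \<sigma> \<tau>) + tcount R' (sw2 R' \<sigma> \<tau>))"
      unfolding q_def r_def by (rule pow_bound[OF lam count_bound(1)[OF m] count_bound(2)[OF m]])
    have "q^(2*r) * (w1 \<sigma> * w2 \<tau> * f \<tau>) = (q^(2*r) * lam^(tcount R \<sigma> + tcount R' \<tau>)) * f \<tau>"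
      unfolding w1_def w2_def tw_def by (simp add: power_add mult_ac)
    also have "\<dots> \<le> lam^(tcount R (sw1 R' \<sigma> \<tau>) + tcount R' (sw2 R' \<sigma> \<tau>)) * f \<tau>"
      by (rule mult_right_mono[OF pb fnn])
    also have "\<dots> = h (\<Phi> p)"
      unfolding h_def \<Phi>_def pp w1_def w2_def tw_def by (simp add: feq power_add)
    finally show ?thesis using pp by simp
  qed
  have fib: "card {a \<in> S1 \<times> S2. \<Phi> a = b} \<le> 2 ^ r" for b
    unfolding S1_def S2_def \<Phi>_def r_def by (rule fiber_card[OF m])
  have hnn: "h b \<ge> 0" if "b \<in> S1 \<times> S2" for b
  proof -
    have "fst b \<in> Omega" using that S1O by auto
    then have "f (fst b) \<ge> 0" using fpos by blast
    moreover have "w1 (fst b) * w2 (snd b) \<ge> 0" using wpos by (simp add: less_imp_le)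
    ultimately show ?thesis unfolding h_def by simp
  qed
  have "q^(2*r) * (W1 * N2) = (\<Sum>p\<in>S1 \<times> S2. q^(2*r) * (w1 (fst p) * w2 (snd p) * f (snd p)))"
  proof -
    have "W1 * N2 = (\<Sum>\<sigma>\<in>S1. \<Sum>\<tau>\<in>S2. w1 \<sigma> * (w2 \<tau> * f \<tau>))" unfolding W1_def N2_def by (rule sum_product)
    also have "\<dots> = (\<Sum>p\<in>S1 \<times> S2. w1 (fst p) * w2 (snd p) * f (snd p))"
      by (simp add: sum.cartesian_product case_prod_beta mult.assoc)
    finally show ?thesis by (simp add: sum_distrib_left)
  qed
  also have "\<dots> \<le> (\<Sum>p\<in>S1 \<times> S2. h (\<Phi> p))" by (rule sum_mono) (rule key)
  also have "\<dots> \<le> real (2^r) * (\<Sum>p\<in>S1 \<times> S2. h p)"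
    by (rule fiber_sum[OF finP finP PhiS hnn fib])
  also have "(\<Sum>p\<in>S1 \<times> S2. h p) = N1 * W2"
  proof -
    have "N1 * W2 = (\<Sum>\<sigma>\<in>S1. \<Sum>\<tau>\<in>S2. (w1 \<sigma> * f \<sigma>) * w2 \<tau>)" unfolding N1_def W2_def by (rule sum_product)
    also have "\<dots> = (\<Sum>p\<in>S1 \<times> S2. h p)"
      by (simp add: sum.cartesian_product case_prod_beta h_def mult_ac)
    finally show ?thesis by simp
  qed
  finally have ineq: "q^(2*r) * (W1 * N2) \<le> 2^r * (N1 * W2)" by simp
  have tm1: "tmean lam R \<rho>1 f = N1 / W1" unfolding tmean_def wmean_def N1_def W1_def S1_def w1_def ..
  have tm2: "tmean lam R' \<rho>2 f = N2 / W2" unfolding tmean_def wmean_def N2_def W2_def S2_def w2_def ..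
  have "(q^2/2)^r * (N2 / W2) = (q^(2*r) * (W1 * N2)) / (2^r * W1 * W2)"
  proof -
    have "(q^2/2)^r = q^(2*r) / 2^r" by (simp add: power_divide power_mult)
    then show ?thesis using W1pos W2pos by (simp add: field_simps)
  qed
  also have "\<dots> \<le> (2^r * (N1 * W2)) / (2^r * W1 * W2)"
    by (rule divide_right_mono[OF ineq]) (use W1pos W2pos in simp)
  also have "\<dots> = N1 / W1" using W2pos by (simp add: field_simps)
  finally show ?thesis unfolding tm1 tm2 q_def r_def .
qed



definition pim :: "rect \<Rightarrow> site \<Rightarrow> site" where
  "pim R u = (case R of (x,y,K,L) \<Rightarrow> (x + (fst u - x) mod K, y + (snd u - y) mod L))"

lemma pim_sbox: "is_rect R \<Longrightarrow> pim R u \<in> sbox R"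
  by (cases R) (auto simp: pim_def sbox_def is_rect_def intro: order.strict_implies_order pos_mod_bound)

lemma pim_inn: "u \<in> inn R \<Longrightarrow> pim R u = u"
  by (cases R; cases u) (auto simp: pim_def inn_def mod_pos_pos_trivial)

lemma pim_shift: "pim R (a + k * fst (snd (snd R)), b + l * snd (snd (snd R))) = pim R (a, b)"
proof (cases R)
  case (fields x y K L)
  have "(a - x + k * K) mod K = (a - x) mod K" by (rule mod_mult_self1)
  then have "(a + k * K - x) mod K = (a - x) mod K" by (simp add: algebra_simps)
  moreover have "(b - y + l * L) mod L = (b - y) mod L" by (rule mod_mult_self1)
  then have "(b + l * L - y) mod L = (b - y) mod L" by (simp add: algebra_simps)
  ultimately show ?thesis using fields by (simp add: pim_def)
qed

lemma pim_decomp: "\<exists>k l. u = (fst (pim R u) + k * fst (snd (snd R)), snd (pim R u) + l * snd (snd (snd R)))"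
proof (cases R)
  case (fields x y K L)
  have "fst u = x + (fst u - x) mod K + ((fst u - x) div K) * K"
    using div_mult_mod_eq[of "fst u - x" K] by linarith
  moreover have "snd u = y + (snd u - y) mod L + ((snd u - y) div L) * L"
    using div_mult_mod_eq[of "snd u - y" L] by linarith
  ultimately show ?thesis using fields
    by (intro exI[of _ "(fst u - x) div K"] exI[of _ "(snd u - y) div L"]) (cases u, simp add: pim_def)
qed

lemma pim_box_inn:
  assumes "is_rect R" "z \<in> sbox R" "pim R z \<in> inn R" shows "pim R z = z"
proof (cases R)
  case (fields x y K L)
  obtain a b where z: "z = (a,b)" by (cases z)
  have K: "K > 0" "L > 0" using assms(1) fields by (auto simp: is_rect_def)
  have a: "x \<le> a" "a \<le> x + K" "y \<le> b" "b \<le> y + L" using assms(2) fields z by (auto simp: sbox_def)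
  have p: "x < x + (a - x) mod K" "y < y + (b - y) mod L"
    using assms(3) fields z by (auto simp: pim_def inn_def)
  have "a < x + K"
  proof (rule ccontr)
    assume "\<not> a < x + K" then have "a - x = K" using a by linarith
    then show False using p by simp
  qed
  moreover have "b < y + L"
  proof (rule ccontr)
    assume "\<not> b < y + L" then have "b - y = L" using a by linarith
    then show False using p by simp
  qed
  ultimately show ?thesis using a fields z by (simp add: pim_def mod_pos_pos_trivial)
qed

lemma near_inn_sbox: "near u w \<Longrightarrow> u \<in> inn R \<Longrightarrow> w \<in> sbox R"
  by (cases R) (auto simp: near_def inn_def sbox_def)

definition periodic :: "rect \<Rightarrow> config \<Rightarrow> bool" where
  "periodic R \<tau> = (\<forall>v. \<tau> v = \<tau> (fst v + width R, snd v) \<and> \<tau> v = \<tau> (fst v, snd v + height R))"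

lemma Omega_per_iff: "\<tau> \<in> Omega_per R \<longleftrightarrow> \<tau> \<in> Omega \<and> periodic R \<tau>"
  unfolding Omega_per_def periodic_def by auto

lemma per_shift1:
  fixes \<tau> :: config and K :: int
  assumes "\<forall>a b. \<tau> (a, b) = \<tau> (a + K, b)"
  shows "\<tau> (a + k * K, b) = \<tau> (a, b)"
proof -
  have n: "\<tau> (a + int n * K, b) = \<tau> (a, b)" for n a
  proof (induction n arbitrary: a)
    case 0 then show ?case by simp
  next
    case (Suc n)
    have "\<tau> (a + int (Suc n) * K, b) = \<tau> ((a + int n * K) + K, b)" by (simp add: algebra_simps)
    also have "\<dots> = \<tau> (a + int n * K, b)" by (rule assms[rule_format, symmetric])
    finally show ?case using Suc by simp
  qed
  show ?thesis
  proof (cases "k \<ge> 0")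
    case True then show ?thesis using n[where n="nat k" and a=a] by simp
  next
    case False
    have "\<tau> ((a + k * K) + int (nat (-k)) * K, b) = \<tau> (a + k * K, b)" by (rule n)
    moreover have "(a + k * K) + int (nat (-k)) * K = a" using False by (simp add: algebra_simps)
    ultimately show ?thesis by (metis (no_types))
  qed
qed

lemma per_shift:
  assumes "periodic R \<tau>"
  shows "\<tau> (a + k * fst (snd (snd R)), b + l * snd (snd (snd R))) = \<tau> (a, b)"
proof -
  let ?K = "fst (snd (snd R))" and ?L = "snd (snd (snd R))"
  have hx: "\<forall>a b. \<tau> (a, b) = \<tau> (a + ?K, b)" using assms by (simp add: periodic_def width_def)
  have hy: "\<forall>a b. (\<lambda>(p,q). \<tau> (q, p)) (a, b) = (\<lambda>(p,q). \<tau> (q, p)) (a + ?L, b)"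
    using assms by (simp add: periodic_def height_def)
  have "\<tau> (a + k * ?K, b + l * ?L) = (\<lambda>(p,q). \<tau> (q, p)) (b + l * ?L, a + k * ?K)" by simp
  also have "\<dots> = (\<lambda>(p,q). \<tau> (q, p)) (b, a + k * ?K)" by (rule per_shift1[OF hy])
  also have "\<dots> = \<tau> (a + k * ?K, b)" by simp
  also have "\<dots> = \<tau> (a, b)" by (rule per_shift1[OF hx])
  finally show ?thesis .
qed

lemma per_pim: "periodic R \<tau> \<Longrightarrow> \<tau> (pim R u) = \<tau> u"
proof -
  assume p: "periodic R \<tau>"
  obtain k l where u: "u = (fst (pim R u) + k * fst (snd (snd R)), snd (pim R u) + l * snd (snd (snd R)))"
    using pim_decomp by blast
  have "\<tau> u = \<tau> (fst (pim R u), snd (pim R u))" by (subst u, rule per_shift[OF p])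
  then show ?thesis by simp
qed

lemma pim_shift_eq: "pim R u = pim R w \<Longrightarrow> \<exists>k l. w = (fst u + k * fst (snd (snd R)), snd u + l * snd (snd (snd R)))"
proof -
  let ?K = "fst (snd (snd R))" and ?L = "snd (snd (snd R))"
  assume e: "pim R u = pim R w"
  obtain k l where u: "u = (fst (pim R u) + k * ?K, snd (pim R u) + l * ?L)"
    using pim_decomp by blast
  obtain k' l' where w: "w = (fst (pim R w) + k' * ?K, snd (pim R w) + l' * ?L)"
    using pim_decomp by blast
  have u1: "fst u = fst (pim R u) + k * ?K" and u2: "snd u = snd (pim R u) + l * ?L"
    using arg_cong[OF u, of fst] arg_cong[OF u, of snd] by simp_all
  have w1: "fst w = fst (pim R u) + k' * ?K" and w2: "snd w = snd (pim R u) + l' * ?L"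
    using arg_cong[OF w, of fst] arg_cong[OF w, of snd] e by simp_all
  have "w = (fst u + (k' - k) * ?K, snd u + (l' - l) * ?L)"
    using u1 u2 w1 w2 by (cases w) (simp add: algebra_simps)
  then show ?thesis by blast
qed

lemma pim_same: "pim R (fst u + k * fst (snd (snd R)), snd u + l * snd (snd (snd R))) = pim R u"
  using pim_shift[of R "fst u" k "snd u" l] by simp



lemma Omega_bc_bc: "\<eta> \<in> Omega_bc (rect_set R) \<tau> \<Longrightarrow> v \<notin> inn R \<Longrightarrow> \<eta> v = \<tau> v"
  unfolding Omega_bc_iff by blast

lemma Omega_bc_O: "\<eta> \<in> Omega_bc A \<tau> \<Longrightarrow> \<eta> \<in> Omega"
  unfolding Omega_bc_def by blast

lemma eta_pi:
  assumes R: "is_rect R" and p: "periodic R \<tau>" and e: "\<eta> \<in> Omega_bc (rect_set R) \<tau>"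
    and z: "z \<in> sbox R" and zw: "pim R z = pim R w"
  shows "\<eta> z = \<eta> (pim R w)"
proof -
  have bc: "\<And>v. v \<notin> inn R \<Longrightarrow> \<eta> v = \<tau> v" using Omega_bc_bc[OF e] .
  show ?thesis
  proof (cases "pim R w \<in> inn R")
    case True
    then have "pim R z = z" using pim_box_inn[OF R z] zw by simp
    then show ?thesis using zw by simp
  next
    case False
    have "z \<notin> inn R" using pim_inn[of z R] zw False by auto
    then have "\<eta> z = \<tau> (pim R z)" using bc per_pim[OF p, of z] by simp
    also have "\<dots> = \<eta> (pim R w)" using zw bc[OF False] by simp
    finally show ?thesis .
  qed
qed

definition ext :: "rect \<Rightarrow> config \<Rightarrow> config" where "ext R \<eta> = (\<lambda>u. \<eta> (pim R u))"

lemma ext_half: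
  assumes R: "is_rect R" and p: "periodic R \<tau>" and e: "\<eta> \<in> Omega_bc (rect_set R) \<tau>"
    and a: "\<eta> (pim R u)" "\<eta> (pim R w)" "u \<noteq> w" "near u w" and i: "pim R u \<in> inn R"
  shows False
proof -
  let ?K = "fst (snd (snd R))" and ?L = "snd (snd (snd R))"
  obtain k l where u: "u = (fst (pim R u) + k * ?K, snd (pim R u) + l * ?L)" using pim_decomp by blast
  define z where "z = (fst w - k * ?K, snd w - l * ?L)"
  have u1: "fst u = fst (pim R u) + k * ?K" "snd u = snd (pim R u) + l * ?L"
    using arg_cong[OF u, of fst] arg_cong[OF u, of snd] by simp_all
  have nz: "near (pim R u) z" using a(4) u1 unfolding near_def z_def by (simp add: algebra_simps)
  have "z \<noteq> pim R u"
  proof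
    assume "z = pim R u"
    then have "fst w - k * ?K = fst (pim R u)" "snd w - l * ?L = snd (pim R u)" unfolding z_def by (metis fst_conv, metis snd_conv)
    then have "fst w = fst u" "snd w = snd u" using u1 by linarith+
    then have "w = u" by (simp add: prod_eq_iff)
    then show False using a(3) by simp
  qed
  moreover have zs: "z \<in> sbox R" using near_inn_sbox[OF nz i] .
  moreover have "pim R z = pim R w"
    using pim_same[of R z k l] unfolding z_def by simp
  then have "\<eta> z" using eta_pi[OF R p e zs] a(2) by simp
  moreover have "\<eta> \<in> Omega" using Omega_bc_O[OF e] .
  ultimately show False using a(1) nz Omega_iff by metis
qed

lemma ext_in:
  assumes R: "is_rect R" and t: "\<tau> \<in> Omega_per R" and e: "\<eta> \<in> Omega_bc (rect_set R) \<tau>"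
  shows "ext R \<eta> \<in> Omega_per R" "\<And>u. u \<in> sbox R \<Longrightarrow> ext R \<eta> u = \<eta> u"
proof -
  have p: "periodic R \<tau>" and tO: "\<tau> \<in> Omega" using t by (simp_all add: Omega_per_iff)
  have bc: "\<And>v. v \<notin> inn R \<Longrightarrow> \<eta> v = \<tau> v" using Omega_bc_bc[OF e] .
  show sb: "\<And>u. u \<in> sbox R \<Longrightarrow> ext R \<eta> u = \<eta> u"
    unfolding ext_def using eta_pi[OF R p e] by metis
  have "ext R \<eta> \<in> Omega"
    unfolding Omega_iff
  proof (intro allI impI notI)
    fix u w assume a: "ext R \<eta> u \<and> ext R \<eta> w \<and> u \<noteq> w" and n: "near u w"
    have a1: "\<eta> (pim R u)" "\<eta> (pim R w)" "u \<noteq> w" using a by (auto simp: ext_def)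
    show False
    proof (cases "pim R u \<in> inn R")
      case True then show False using ext_half[OF R p e a1 n] by blast
    next
      case False
      show False
      proof (cases "pim R w \<in> inn R")
        case True then show False using ext_half[OF R p e a1(2) a1(1) _ near_sym[OF n]] a1(3) by blast
      next
        case F2: False
        have "\<tau> u" "\<tau> w" using a1 bc[OF False] bc[OF F2] per_pim[OF p] by auto
        then show False using tO a1(3) n Omega_iff by metis
      qed
    qed
  qed
  moreover have "periodic R (ext R \<eta>)"
    unfolding periodic_def width_def height_def ext_def
    using pim_same[of R _ 1 0] pim_same[of R _ 0 1] by simp
  ultimately show "ext R \<eta> \<in> Omega_per R" by (simp add: Omega_per_iff)
qed

definition cls :: "rect \<Rightarrow> config \<Rightarrow> config set" where
  "cls R \<tau> = {\<tau>' \<in> Omega_per R. \<forall>u \<in> sbox R - inn R. \<tau>' u = \<tau> u}"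

definition res :: "rect \<Rightarrow> config \<Rightarrow> config \<Rightarrow> config" where
  "res R \<tau> \<tau>' = (\<lambda>u. if u \<in> sbox R then \<tau>' u else \<tau> u)"

lemma bij_ext:
  assumes R: "is_rect R" and t: "\<tau> \<in> Omega_per R"
  shows "bij_betw (ext R) (Omega_bc (rect_set R) \<tau>) (cls R \<tau>)"
proof (rule bij_betw_byWitness[where f' = "res R \<tau>"])
  have p: "periodic R \<tau>" and tO: "\<tau> \<in> Omega" using t by (simp_all add: Omega_per_iff)
  show "\<forall>a\<in>Omega_bc (rect_set R) \<tau>. res R \<tau> (ext R a) = a"
  proof
    fix \<eta> assume e: "\<eta> \<in> Omega_bc (rect_set R) \<tau>"
    have bc: "\<And>v. v \<notin> inn R \<Longrightarrow> \<eta> v = \<tau> v" using Omega_bc_bc[OF e] .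
    show "res R \<tau> (ext R \<eta>) = \<eta>"
    proof
      fix u show "res R \<tau> (ext R \<eta>) u = \<eta> u"
        using ext_in(2)[OF R t e, of u] bc[of u] inn_sub_box[of R] unfolding res_def by auto
    qed
  qed
  show "\<forall>a'\<in>cls R \<tau>. ext R (res R \<tau> a') = a'"
  proof
    fix \<tau>' assume c: "\<tau>' \<in> cls R \<tau>"
    then have p': "periodic R \<tau>'" by (simp add: cls_def Omega_per_iff)
    show "ext R (res R \<tau> \<tau>') = \<tau>'"
    proof
      fix u show "ext R (res R \<tau> \<tau>') u = \<tau>' u"
        unfolding ext_def res_def using pim_sbox[OF R, of u] per_pim[OF p', of u] by simp
    qed
  qed
  show "ext R ` Omega_bc (rect_set R) \<tau> \<subseteq> cls R \<tau>"
  proof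
    fix z assume "z \<in> ext R ` Omega_bc (rect_set R) \<tau>"
    then obtain \<eta> where z: "z = ext R \<eta>" and e: "\<eta> \<in> Omega_bc (rect_set R) \<tau>" by blast
    have bc: "\<And>v. v \<notin> inn R \<Longrightarrow> \<eta> v = \<tau> v" using Omega_bc_bc[OF e] .
    show "z \<in> cls R \<tau>" unfolding cls_def z using ext_in[OF R t e] bc by auto
  qed
  show "res R \<tau> ` cls R \<tau> \<subseteq> Omega_bc (rect_set R) \<tau>"
  proof
    fix z assume "z \<in> res R \<tau> ` cls R \<tau>"
    then obtain \<tau>' where z: "z = res R \<tau> \<tau>'" and c: "\<tau>' \<in> cls R \<tau>" by blast
    have t'O: "\<tau>' \<in> Omega" and bd: "\<forall>u \<in> sbox R - inn R. \<tau>' u = \<tau> u"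
      using c by (simp_all add: cls_def Omega_per_iff)
    have "res R \<tau> \<tau>' \<in> Omega"
      unfolding Omega_iff
    proof (intro allI impI notI)
      fix u w assume a: "res R \<tau> \<tau>' u \<and> res R \<tau> \<tau>' w \<and> u \<noteq> w" and n: "near u w"
      have n': "near w u" using near_sym[OF n] .
      show False
      proof (cases "u \<in> sbox R \<and> w \<in> sbox R")
        case True then show False using a n t'O Omega_iff unfolding res_def by metis
      next
        case False
        then have "u \<notin> inn R" "w \<notin> inn R"
          using near_inn_sbox[OF n, of R] near_inn_sbox[OF n', of R] inn_sub_box[of R] by auto
        then have "\<tau> u" "\<tau> w" using a bd unfolding res_def by (auto split: if_splits)
        then show False using a n tO Omega_iff by metis
      qed
    qed
    moreover have "\<forall>v. v \<notin> inn R \<longrightarrow> res R \<tau> \<tau>' v = \<tau> v" using bd unfolding res_def by auto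
    ultimately show "z \<in> Omega_bc (rect_set R) \<tau>" unfolding z Omega_bc_iff by blast
  qed
qed



lemma group_bounds:
  fixes w f :: "config \<Rightarrow> real"
  assumes fin: "finite S" and ne: "S \<noteq> {}" and wpos: "\<forall>x\<in>S. w x > 0"
    and cl: "\<forall>x\<in>S. cl x \<subseteq> S \<and> x \<in> cl x" and clq: "\<forall>x\<in>S. \<forall>y\<in>cl x. cl y = cl x"
  shows "(\<forall>x\<in>S. m \<le> wmean w (cl x) f) \<Longrightarrow> m \<le> wmean w S f"
    and "(\<forall>x\<in>S. wmean w (cl x) f \<le> M) \<Longrightarrow> wmean w S f \<le> M"
proof -
  have SU: "S = \<Union>(cl ` S)" using cl by blast
  have finA: "\<forall>A\<in>cl ` S. finite A"
  proof
    fix A assume "A \<in> cl ` S"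
    then have "A \<subseteq> S" using cl by blast
    then show "finite A" using fin by (rule finite_subset)
  qed
  have dis: "\<forall>A\<in>cl ` S. \<forall>B\<in>cl ` S. A \<noteq> B \<longrightarrow> A \<inter> B = {}"
  proof (intro ballI impI)
    fix A B assume A: "A \<in> cl ` S" and B: "B \<in> cl ` S" and AB: "A \<noteq> B"
    obtain x where x: "x \<in> S" "A = cl x" using A by blast
    obtain y where y: "y \<in> S" "B = cl y" using B by blast
    show "A \<inter> B = {}"
    proof (rule ccontr)
      assume "A \<inter> B \<noteq> {}"
      then obtain z where z: "z \<in> cl x" "z \<in> cl y" using x y by blast
      have "cl z = cl x" using clq x(1) z(1) by blast
      moreover have "cl z = cl y" using clq y(1) z(2) by blast
      ultimately show False using AB x y by simp
    qed
  qed
  have sumS: "(\<Sum>s\<in>S. g s) = (\<Sum>A\<in>cl ` S. \<Sum>s\<in>A. g s)" for g :: "config \<Rightarrow> real"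
  proof -
    have "(\<Sum>s\<in>\<Union>(cl ` S). g s) = (\<Sum>A\<in>cl ` S. \<Sum>s\<in>A. g s)"
      using sum.Union_disjoint[OF finA dis, of g] by simp
    then show ?thesis using SU by simp
  qed
  have Wpos: "(\<Sum>s\<in>S. w s) > 0" using fin ne wpos by (intro sum_pos) auto
  have Apos: "(\<Sum>s\<in>A. w s) > 0" if A: "A \<in> cl ` S" for A
  proof -
    obtain x where x: "x \<in> S" "A = cl x" using A by blast
    have "A \<subseteq> S" "A \<noteq> {}" using cl x by auto
    moreover have "finite A" using finA A by blast
    ultimately show ?thesis using wpos by (intro sum_pos) auto
  qed
  show "m \<le> wmean w S f" if lb: "\<forall>x\<in>S. m \<le> wmean w (cl x) f"
  proof -
    have "m * (\<Sum>s\<in>A. w s) \<le> (\<Sum>s\<in>A. w s * f s)" if A: "A \<in> cl ` S" for A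
    proof -
      obtain x where x: "x \<in> S" "A = cl x" using A by blast
      have "m \<le> (\<Sum>s\<in>A. w s * f s) / (\<Sum>s\<in>A. w s)" using lb x unfolding wmean_def by blast
      then show ?thesis using Apos[OF A] by (simp add: le_divide_eq)
    qed
    then have "(\<Sum>A\<in>cl ` S. m * (\<Sum>s\<in>A. w s)) \<le> (\<Sum>A\<in>cl ` S. \<Sum>s\<in>A. w s * f s)"
      by (rule sum_mono)
    then have "m * (\<Sum>s\<in>S. w s) \<le> (\<Sum>s\<in>S. w s * f s)"
      by (simp only: sumS sum_distrib_left)
    then show ?thesis using Wpos unfolding wmean_def by (simp add: le_divide_eq)
  qed
  show "wmean w S f \<le> M" if ub: "\<forall>x\<in>S. wmean w (cl x) f \<le> M"
  proof -
    have "(\<Sum>s\<in>A. w s * f s) \<le> M * (\<Sum>s\<in>A. w s)" if A: "A \<in> cl ` S" for A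
    proof -
      obtain x where x: "x \<in> S" "A = cl x" using A by blast
      have "(\<Sum>s\<in>A. w s * f s) / (\<Sum>s\<in>A. w s) \<le> M" using ub x unfolding wmean_def by blast
      then show ?thesis using Apos[OF A] by (simp add: divide_le_eq)
    qed
    then have "(\<Sum>A\<in>cl ` S. \<Sum>s\<in>A. w s * f s) \<le> (\<Sum>A\<in>cl ` S. M * (\<Sum>s\<in>A. w s))"
      by (rule sum_mono)
    then have "(\<Sum>s\<in>S. w s * f s) \<le> M * (\<Sum>s\<in>S. w s)"
      by (simp only: sumS sum_distrib_left)
    then show ?thesis using Wpos unfolding wmean_def by (simp add: divide_le_eq)
  qed
qed


lemma weight_local:
  assumes "\<forall>u\<in>sbox R. \<sigma> u = \<sigma>' u"
  shows "weight lam R \<sigma> = weight lam R \<sigma>'"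
proof -
  have "{F. face F \<subseteq> rect_set R \<and> vacant \<sigma> F} = {F. face F \<subseteq> rect_set R \<and> vacant \<sigma>' F}"
  proof (intro Collect_cong conj_cong refl)
    fix F assume "face F \<subseteq> rect_set R"
    then have "corners F \<subseteq> sbox R" using corner_in_box[of F R] by (auto simp: FR_def)
    then show "vacant \<sigma> F = vacant \<sigma>' F" using assms unfolding vacant_iff by auto
  qed
  then show ?thesis unfolding weight_def by simp
qed

lemma weight_pos: "lam > 0 \<Longrightarrow> weight lam R \<sigma> > 0" unfolding weight_def by simp

lemma finite_Omega_per:
  assumes R: "is_rect R" shows "finite (Omega_per R)"
proof -
  let ?r = "\<lambda>\<sigma> u. if u \<in> sbox R then \<sigma> u else False"
  have "inj_on ?r (Omega_per R)"
  proof (rule inj_onI)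
    fix \<sigma> \<sigma>' assume s: "\<sigma> \<in> Omega_per R" "\<sigma>' \<in> Omega_per R" and e: "?r \<sigma> = ?r \<sigma>'"
    have p: "periodic R \<sigma>" "periodic R \<sigma>'" using s by (simp_all add: Omega_per_iff)
    show "\<sigma> = \<sigma>'"
    proof
      fix u
      have "\<sigma> (pim R u) = \<sigma>' (pim R u)" using fun_cong[OF e, of "pim R u"] pim_sbox[OF R, of u] by simp
      then show "\<sigma> u = \<sigma>' u" using per_pim[OF p(1)] per_pim[OF p(2)] by simp
    qed
  qed
  moreover have "?r ` Omega_per R \<subseteq> (\<lambda>B u. u \<in> B) ` Pow (sbox R)"
  proof
    fix z assume "z \<in> ?r ` Omega_per R"
    then obtain \<sigma> where z: "z = ?r \<sigma>" by blast
    have "z = (\<lambda>u. u \<in> {u \<in> sbox R. \<sigma> u})" unfolding z by auto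
    then show "z \<in> (\<lambda>B u. u \<in> B) ` Pow (sbox R)" by blast
  qed
  then have "finite (?r ` Omega_per R)" by (rule finite_subset) (use finite_box in auto)
  ultimately show ?thesis using finite_image_iff by blast
qed

lemma empty_per: "(\<lambda>_. False) \<in> Omega_per R"
  by (simp add: Omega_per_iff Omega_iff periodic_def)

definition boxlocal :: "rect \<Rightarrow> (config \<Rightarrow> real) \<Rightarrow> bool" where
  "boxlocal R f = (\<forall>\<sigma>\<in>Omega. \<forall>\<sigma>'\<in>Omega. (\<forall>u\<in>sbox R. \<sigma> u = \<sigma>' u) \<longrightarrow> f \<sigma> = f \<sigma>')"

lemma cls_mean:
  assumes R: "is_rect R" and t: "\<tau> \<in> Omega_per R" and bl: "boxlocal R f"
  shows "wmean (weight lam R) (cls R \<tau>) f = bc_mean lam R \<tau> f"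
proof -
  have bij: "bij_betw (ext R) (Omega_bc (rect_set R) \<tau>) (cls R \<tau>)" by (rule bij_ext[OF R t])
  have eqs: "weight lam R (ext R \<eta>) = weight lam R \<eta>" "f (ext R \<eta>) = f \<eta>"
    if e: "\<eta> \<in> Omega_bc (rect_set R) \<tau>" for \<eta>
  proof -
    have a: "\<forall>u\<in>sbox R. ext R \<eta> u = \<eta> u" using ext_in(2)[OF R t e] by blast
    show "weight lam R (ext R \<eta>) = weight lam R \<eta>" by (rule weight_local[OF a])
    have "ext R \<eta> \<in> Omega" using ext_in(1)[OF R t e] by (simp add: Omega_per_iff)
    then show "f (ext R \<eta>) = f \<eta>" using bl a Omega_bc_O[OF e] unfolding boxlocal_def by blast
  qed
  have "(\<Sum>\<sigma>\<in>cls R \<tau>. weight lam R \<sigma> * f \<sigma>) = (\<Sum>\<eta>\<in>Omega_bc (rect_set R) \<tau>. weight lam R (ext R \<eta>) * f (ext R \<eta>))"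
    by (rule sum.reindex_bij_betw[OF bij, symmetric])
  also have "\<dots> = (\<Sum>\<eta>\<in>Omega_bc (rect_set R) \<tau>. weight lam R \<eta> * f \<eta>)"
    by (rule sum.cong) (simp_all add: eqs)
  finally have n: "(\<Sum>\<sigma>\<in>cls R \<tau>. weight lam R \<sigma> * f \<sigma>) = (\<Sum>\<eta>\<in>Omega_bc (rect_set R) \<tau>. weight lam R \<eta> * f \<eta>)" .
  have "(\<Sum>\<sigma>\<in>cls R \<tau>. weight lam R \<sigma>) = (\<Sum>\<eta>\<in>Omega_bc (rect_set R) \<tau>. weight lam R (ext R \<eta>))"
    by (rule sum.reindex_bij_betw[OF bij, symmetric])
  also have "\<dots> = (\<Sum>\<eta>\<in>Omega_bc (rect_set R) \<tau>. weight lam R \<eta>)"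
    by (rule sum.cong) (simp_all add: eqs)
  finally show ?thesis using n unfolding bc_mean_def wmean_def by simp
qed

lemma per_mix:
  assumes R: "is_rect R" and lam: "lam > 0" and bl: "boxlocal R f"
  shows "(\<forall>\<rho>\<in>Omega. m \<le> bc_mean lam R \<rho> f) \<Longrightarrow> m \<le> per_mean lam R f"
    and "(\<forall>\<rho>\<in>Omega. bc_mean lam R \<rho> f \<le> M) \<Longrightarrow> per_mean lam R f \<le> M"
proof -
  have fin: "finite (Omega_per R)" by (rule finite_Omega_per[OF R])
  have ne: "Omega_per R \<noteq> {}" using empty_per by blast
  have wp: "\<forall>x\<in>Omega_per R. weight lam R x > 0" using weight_pos[OF lam] by blast
  have cl: "\<forall>x\<in>Omega_per R. cls R x \<subseteq> Omega_per R \<and> x \<in> cls R x" by (auto simp: cls_def)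
  have clq: "\<forall>x\<in>Omega_per R. \<forall>y\<in>cls R x. cls R y = cls R x" by (auto simp: cls_def)
  have eq: "\<And>x. x \<in> Omega_per R \<Longrightarrow> wmean (weight lam R) (cls R x) f = bc_mean lam R x f"
    by (rule cls_mean[OF R _ bl])
  have O: "\<And>x. x \<in> Omega_per R \<Longrightarrow> x \<in> Omega" by (simp add: Omega_per_iff)
  show "m \<le> per_mean lam R f" if "\<forall>\<rho>\<in>Omega. m \<le> bc_mean lam R \<rho> f"
    unfolding per_mean_def using group_bounds(1)[OF fin ne wp cl clq] that eq O by metis
  show "per_mean lam R f \<le> M" if "\<forall>\<rho>\<in>Omega. bc_mean lam R \<rho> f \<le> M"
    unfolding per_mean_def using group_bounds(2)[OF fin ne wp cl clq] that eq O by metis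
qed



lemma space_cfg: "space cfg_space = UNIV"
  unfolding cfg_space_def space_PiM by simp

lemma sets_coord: "{\<sigma>. \<sigma> u} \<in> sets cfg_space"
proof -
  have m: "(\<lambda>\<sigma>::config. \<sigma> u) \<in> measurable cfg_space (count_space UNIV)"
    unfolding cfg_space_def by (rule measurable_component_singleton) simp
  have "(\<lambda>\<sigma>::config. \<sigma> u) -` {True} \<inter> space cfg_space \<in> sets cfg_space"
    by (rule measurable_sets[OF m]) simp
  moreover have "(\<lambda>\<sigma>::config. \<sigma> u) -` {True} \<inter> space cfg_space = {\<sigma>. \<sigma> u}"
    by (auto simp: space_cfg)
  ultimately show ?thesis by simp
qed

lemma sets_coord_eq: "{\<sigma>. \<sigma> u = c} \<in> sets cfg_space"
proof (cases c)
  case True then show ?thesis using sets_coord[of u] by simp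
next
  case False
  have "{\<sigma>. \<sigma> u = c} = space cfg_space - {\<sigma>. \<sigma> u}" using False by (auto simp: space_cfg)
  then show ?thesis using sets_coord[of u] by auto
qed

lemma sets_INT_cfg:
  fixes F :: "'i::countable \<Rightarrow> config set"
  assumes "\<And>i. i \<in> I \<Longrightarrow> F i \<in> sets cfg_space"
  shows "(\<Inter>i\<in>I. F i) \<in> sets cfg_space"
proof (rule sets.countable_INT'')
  show "UNIV \<in> sets cfg_space" using sets.top[of cfg_space] by (simp add: space_cfg)
qed (use assms in auto)

lemma sets_pairs: "{\<sigma>::config. \<forall>u v. P u v \<longrightarrow> \<not> (\<sigma> u \<and> \<sigma> v)} \<in> sets cfg_space"
proof -
  have "{\<sigma>::config. \<forall>u v. P u v \<longrightarrow> \<not> (\<sigma> u \<and> \<sigma> v)} =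
        (\<Inter>p\<in>{p. P (fst p) (snd p)}. space cfg_space - ({\<sigma>. \<sigma> (fst p)} \<inter> {\<sigma>. \<sigma> (snd p)}))"
    by (auto simp: space_cfg)
  also have "\<dots> \<in> sets cfg_space"
    by (rule sets_INT_cfg) (use sets_coord in auto)
  finally show ?thesis .
qed

lemma Omega_alt: "Omega = {\<sigma>. \<forall>u v. (u \<noteq> v \<and> near u v) \<longrightarrow> \<not> (\<sigma> u \<and> \<sigma> v)}"
  using Omega_iff by blast

lemma sets_Omega: "Omega \<in> sets cfg_space"
  unfolding Omega_alt by (rule sets_pairs)

definition OV :: "rect \<Rightarrow> config set" where
  "OV Q = {\<sigma>. \<forall>u v. (u \<notin> inn Q \<and> v \<notin> inn Q \<and> u \<noteq> v \<and> near u v) \<longrightarrow> \<not> (\<sigma> u \<and> \<sigma> v)}"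

lemma sets_OV: "OV Q \<in> sets cfg_space" unfolding OV_def by (rule sets_pairs)

lemma Omega_OV: "Omega \<subseteq> OV Q" unfolding Omega_alt OV_def by blast

definition Bb :: "rect \<Rightarrow> site set \<Rightarrow> config set" where
  "Bb Q b = OV Q \<inter> (\<Inter>u\<in>sbox Q - inn Q. {\<sigma>. \<sigma> u = (u \<in> b)})"

lemma sets_Bb: "Bb Q b \<in> sets cfg_space"
  unfolding Bb_def by (intro sets.Int sets_OV sets_INT_cfg sets_coord_eq)

lemma swap_in:
  assumes ov: "\<sigma>' \<in> OV Q" and e: "\<eta> \<in> Omega_bc (rect_set Q) \<sigma>" and bd: "\<forall>u\<in>sbox Q - inn Q. \<sigma> u = \<sigma>' u"
  shows "(\<lambda>u. if u \<in> inn Q then \<eta> u else \<sigma>' u) \<in> Omega_bc (rect_set Q) \<sigma>'"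
proof -
  let ?\<phi> = "\<lambda>u. if u \<in> inn Q then \<eta> u else \<sigma>' u"
  have eO: "\<eta> \<in> Omega" using Omega_bc_O[OF e] .
  have ebc: "\<And>v. v \<notin> inn Q \<Longrightarrow> \<eta> v = \<sigma> v" using Omega_bc_bc[OF e] .
  have "?\<phi> \<in> Omega"
    unfolding Omega_iff
  proof (intro allI impI notI)
    fix u w assume a: "?\<phi> u \<and> ?\<phi> w \<and> u \<noteq> w" and n: "near u w"
    have n': "near w u" using near_sym[OF n] .
    have agree: "?\<phi> z = \<eta> z" if "z \<in> sbox Q" for z
      using that bd ebc by auto
    show False
    proof (cases "u \<in> inn Q \<or> w \<in> inn Q")
      case True
      then have "u \<in> sbox Q" "w \<in> sbox Q"
        using near_inn_sbox[OF n, of Q] near_inn_sbox[OF n', of Q] inn_sub_box[of Q] by auto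
      then have "\<eta> u \<and> \<eta> w" using a agree by simp
      then show False using eO a n Omega_iff by metis
    next
      case False
      then have "\<sigma>' u \<and> \<sigma>' w" using a by simp
      then show False using ov False a n unfolding OV_def by blast
    qed
  qed
  moreover have "\<forall>v. v \<notin> inn Q \<longrightarrow> ?\<phi> v = \<sigma>' v" by simp
  ultimately show ?thesis unfolding Omega_bc_iff by blast
qed

lemma tcount_inn: "(\<forall>u\<in>inn Q. \<eta> u = \<eta>' u) \<Longrightarrow> tcount Q \<eta> = tcount Q \<eta>'"
proof -
  assume a: "\<forall>u\<in>inn Q. \<eta> u = \<eta>' u"
  have "{v. \<eta> v \<and> v \<in> inn Q} = {v. \<eta>' v \<and> v \<in> inn Q}" using a by blast
  then show ?thesis unfolding tcount_def by simp
qed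

lemma tmean_inv:
  assumes ov: "\<sigma> \<in> OV Q" "\<sigma>' \<in> OV Q" and bd: "\<forall>u\<in>sbox Q - inn Q. \<sigma> u = \<sigma>' u" and bl: "boxlocal Q h"
  shows "tmean lam Q \<sigma> h = tmean lam Q \<sigma>' h"
proof -
  let ?\<phi> = "\<lambda>\<eta> u. if u \<in> inn Q then \<eta> u else \<sigma>' u"
  let ?\<psi> = "\<lambda>\<eta> u. if u \<in> inn Q then \<eta> u else \<sigma> u"
  have bd': "\<forall>u\<in>sbox Q - inn Q. \<sigma>' u = \<sigma> u" using bd by simp
  have bij: "bij_betw ?\<phi> (Omega_bc (rect_set Q) \<sigma>) (Omega_bc (rect_set Q) \<sigma>')"
  proof (rule bij_betw_byWitness[where f' = ?\<psi>])
    show "\<forall>a\<in>Omega_bc (rect_set Q) \<sigma>. ?\<psi> (?\<phi> a) = a"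
    proof
      fix a assume a: "a \<in> Omega_bc (rect_set Q) \<sigma>"
      show "?\<psi> (?\<phi> a) = a"
      proof
        fix u show "?\<psi> (?\<phi> a) u = a u" using Omega_bc_bc[OF a, of u] by simp
      qed
    qed
    show "\<forall>a\<in>Omega_bc (rect_set Q) \<sigma>'. ?\<phi> (?\<psi> a) = a"
    proof
      fix a assume a: "a \<in> Omega_bc (rect_set Q) \<sigma>'"
      show "?\<phi> (?\<psi> a) = a"
      proof
        fix u show "?\<phi> (?\<psi> a) u = a u" using Omega_bc_bc[OF a, of u] by simp
      qed
    qed
    show "?\<phi> ` Omega_bc (rect_set Q) \<sigma> \<subseteq> Omega_bc (rect_set Q) \<sigma>'"
      using swap_in[OF ov(2) _ bd] by blast
    show "?\<psi> ` Omega_bc (rect_set Q) \<sigma>' \<subseteq> Omega_bc (rect_set Q) \<sigma>"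
      using swap_in[OF ov(1) _ bd'] by blast
  qed
  have eqs: "tw lam Q (?\<phi> \<eta>) = tw lam Q \<eta>" "h (?\<phi> \<eta>) = h \<eta>" if e: "\<eta> \<in> Omega_bc (rect_set Q) \<sigma>" for \<eta>
  proof -
    show "tw lam Q (?\<phi> \<eta>) = tw lam Q \<eta>" unfolding tw_def by (subst tcount_inn[of Q _ \<eta>]) auto
    have pO: "?\<phi> \<eta> \<in> Omega" using Omega_bc_O[OF swap_in[OF ov(2) e bd]] .
    have ag: "\<forall>u\<in>sbox Q. ?\<phi> \<eta> u = \<eta> u" using bd Omega_bc_bc[OF e] by auto
    show "h (?\<phi> \<eta>) = h \<eta>" by (rule bl[unfolded boxlocal_def, rule_format, OF pO Omega_bc_O[OF e]]) (use ag in blast)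
  qed
  have n: "(\<Sum>\<eta>\<in>Omega_bc (rect_set Q) \<sigma>'. tw lam Q \<eta> * h \<eta>) = (\<Sum>\<eta>\<in>Omega_bc (rect_set Q) \<sigma>. tw lam Q \<eta> * h \<eta>)"
    by (subst sum.reindex_bij_betw[OF bij, symmetric]) (rule sum.cong, simp_all add: eqs)
  have d: "(\<Sum>\<eta>\<in>Omega_bc (rect_set Q) \<sigma>'. tw lam Q \<eta>) = (\<Sum>\<eta>\<in>Omega_bc (rect_set Q) \<sigma>. tw lam Q \<eta>)"
    by (subst sum.reindex_bij_betw[OF bij, symmetric]) (rule sum.cong, simp_all add: eqs)
  show ?thesis unfolding tmean_def wmean_def n d ..
qed

lemma wmean_sum:
  assumes "finite V"
  shows "wmean w S (\<lambda>x. \<Sum>v\<in>V. c v * g v x) = (\<Sum>v\<in>V. c v * wmean w S (g v))"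
proof -
  have "(\<Sum>x\<in>S. w x * (\<Sum>v\<in>V. c v * g v x)) = (\<Sum>x\<in>S. \<Sum>v\<in>V. c v * (w x * g v x))"
    by (simp add: sum_distrib_left mult_ac)
  also have "\<dots> = (\<Sum>v\<in>V. \<Sum>x\<in>S. c v * (w x * g v x))" by (rule sum.swap)
  also have "\<dots> = (\<Sum>v\<in>V. c v * (\<Sum>x\<in>S. w x * g v x))" by (simp add: sum_distrib_left)
  finally have "(\<Sum>x\<in>S. w x * (\<Sum>v\<in>V. c v * g v x)) = (\<Sum>v\<in>V. c v * (\<Sum>x\<in>S. w x * g v x))" .
  then have "wmean w S (\<lambda>x. \<Sum>v\<in>V. c v * g v x) = (\<Sum>v\<in>V. c v * (\<Sum>x\<in>S. w x * g v x)) / (\<Sum>x\<in>S. w x)"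
    unfolding wmean_def by simp
  also have "\<dots> = (\<Sum>v\<in>V. c v * (\<Sum>x\<in>S. w x * g v x) / (\<Sum>x\<in>S. w x))"
    by (rule sum_divide_distrib)
  also have "\<dots> = (\<Sum>v\<in>V. c v * wmean w S (g v))" unfolding wmean_def by simp
  finally show ?thesis .
qed

lemma finite_vals:
  assumes bl: "boxlocal Q f"
  shows "finite (f ` Omega)"
proof -
  let ?r = "\<lambda>\<sigma>::config. \<lambda>u. if u \<in> sbox Q then \<sigma> u else False"
  have "f ` Omega \<subseteq> f ` ((\<lambda>B u. u \<in> B) ` Pow (sbox Q))"
  proof
    fix z assume "z \<in> f ` Omega"
    then obtain \<sigma> where s: "\<sigma> \<in> Omega" "z = f \<sigma>" by blast
    have rO: "?r \<sigma> \<in> Omega" unfolding Omega_iff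
    proof (intro allI impI)
      fix u v assume "?r \<sigma> u \<and> ?r \<sigma> v \<and> u \<noteq> v"
      then have "\<sigma> u \<and> \<sigma> v \<and> u \<noteq> v" by (simp split: if_splits)
      then show "\<not> near u v" using s(1) Omega_iff by metis
    qed
    have "\<forall>u\<in>sbox Q. \<sigma> u = ?r \<sigma> u" by simp
    then have fe: "f \<sigma> = f (?r \<sigma>)" using bl[unfolded boxlocal_def, rule_format, OF s(1) rO] by blast
    have "?r \<sigma> \<in> (\<lambda>B u. u \<in> B) ` Pow (sbox Q)"
      by (rule image_eqI[of _ _ "{u\<in>sbox Q. \<sigma> u}"]) (auto intro!: ext)
    then show "z \<in> f ` ((\<lambda>B u. u \<in> B) ` Pow (sbox Q))" unfolding s(2) fe by (rule imageI)
  qed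
  moreover have "finite (f ` ((\<lambda>B u. u \<in> B) ` Pow (sbox Q)))" using finite_box[of Q] by simp
  ultimately show ?thesis by (rule finite_subset)
qed



lemma bounded_rect: "bounded (rect_set Q)"
proof -
  have b: "bounded {a..b::real}" for a b by (rule compact_imp_bounded) simp
  show ?thesis by (cases Q) (simp add: rect_set_def bounded_Times b)
qed

lemma outside_Bb: "outside_event (rect_set Q) (Bb Q b)"
  unfolding outside_event_def
proof (intro conjI sets_Bb allI impI)
  fix \<sigma> \<tau> :: config assume a: "\<forall>v. pt v \<notin> interior (rect_set Q) \<longrightarrow> \<sigma> v = \<tau> v"
  have a': "\<sigma> v = \<tau> v" if "v \<notin> inn Q" for v
  proof -
    have "pt v \<notin> interior (rect_set Q)" using that by (simp add: pt_in_interior)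
    then show ?thesis using a by blast
  qed
  have "\<sigma> \<in> OV Q \<longleftrightarrow> \<tau> \<in> OV Q" unfolding OV_def using a' by auto
  moreover have "(\<forall>u\<in>sbox Q - inn Q. \<sigma> u = (u \<in> b)) \<longleftrightarrow> (\<forall>u\<in>sbox Q - inn Q. \<tau> u = (u \<in> b))"
    using a' by auto
  ultimately show "\<sigma> \<in> Bb Q b \<longleftrightarrow> \<tau> \<in> Bb Q b" unfolding Bb_def by blast
qed

lemma gibbs_bounds:
  fixes lam :: real and \<mu> :: "config measure"
  assumes lam: "lam > 0" and g: "gibbs lam \<mu>" and fm: "f \<in> borel_measurable cfg_space"
    and bl: "boxlocal Q f"
  shows "(\<forall>\<sigma>\<in>Omega. m \<le> tmean lam Q \<sigma> f) \<Longrightarrow> m \<le> (\<integral>\<sigma>. f \<sigma> \<partial>\<mu>)"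
    and "(\<forall>\<sigma>\<in>Omega. tmean lam Q \<sigma> f \<le> M) \<Longrightarrow> (\<integral>\<sigma>. f \<sigma> \<partial>\<mu>) \<le> M"
proof -
  have ps: "prob_space \<mu>" and sets: "sets \<mu> = sets cfg_space" and em: "emeasure \<mu> Omega = 1"
    and dlr: "\<And>A E B. bounded A \<Longrightarrow> E \<in> sets cfg_space \<Longrightarrow> outside_event A B \<Longrightarrow>
        measure \<mu> (E \<inter> B) = (\<integral>\<sigma>. indicator B \<sigma> * spec lam A \<sigma> E \<partial>\<mu>)"
    using g unfolding gibbs_def by blast+
  interpret P: prob_space \<mu> by (rule ps)
  have spc: "space \<mu> = UNIV" using sets_eq_imp_space_eq[OF sets] space_cfg by simp
  have mO: "measure \<mu> Omega = 1" using em P.emeasure_eq_measure by simp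
  let ?A = "rect_set Q" and ?Bd = "sbox Q - inn Q"
  define V where "V = f ` Omega"
  define Ev where "Ev v = {\<sigma> \<in> Omega. f \<sigma> = v}" for v
  have finV: "finite V" unfolding V_def by (rule finite_vals[OF bl])
  have finBd: "finite ?Bd" using finite_box by auto
  have Ev_sets: "Ev v \<in> sets cfg_space" for v
  proof -
    have "f -` {v} \<inter> space cfg_space \<in> sets cfg_space" by (rule measurable_sets[OF fm]) simp
    then have "Omega \<inter> (f -` {v} \<inter> space cfg_space) \<in> sets cfg_space" using sets_Omega by blast
    moreover have "Omega \<inter> (f -` {v} \<inter> space cfg_space) = Ev v" unfolding Ev_def space_cfg by auto
    ultimately show ?thesis by simp
  qed
  have Ev_ev: "Ev v \<in> sets \<mu>" for v using Ev_sets sets by simp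
  have intE: "integrable \<mu> (indicator (Ev v) :: config \<Rightarrow> real)" for v
    by (rule integrable_real_indicator[OF Ev_ev]) (simp add: P.emeasure_eq_measure)
  have Bb_ev: "Bb Q b \<in> sets \<mu>" for b using sets_Bb sets by simp
  have O_ev: "Omega \<in> sets \<mu>" using sets_Omega sets by simp
  have OV_ev: "OV Q \<in> sets \<mu>" using sets_OV sets by simp
  have fm': "f \<in> borel_measurable \<mu>" by (subst measurable_cong_sets[OF sets refl]) (rule fm)
  have int_eq: "(\<integral>\<sigma>. f \<sigma> \<partial>\<mu>) = (\<Sum>v\<in>V. v * measure \<mu> (Ev v))"
  proof -
    have ae: "AE \<sigma> in \<mu>. f \<sigma> = (\<Sum>v\<in>V. v * indicator (Ev v) \<sigma>)"
    proof -
      have "AE \<sigma> in \<mu>. \<sigma> \<in> Omega" using P.AE_in_set_eq_1[OF O_ev] mO by simp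
      then show ?thesis
      proof (rule AE_mp[OF _ AE_I2], intro impI)
        fix \<sigma> assume s: "\<sigma> \<in> Omega"
        have "(\<Sum>v\<in>V. v * indicator (Ev v) \<sigma>) = (\<Sum>v\<in>V. if v = f \<sigma> then v else 0)"
          by (rule sum.cong) (auto simp: Ev_def s indicator_def)
        also have "\<dots> = f \<sigma>" using finV s unfolding V_def by (simp add: sum.delta')
        finally show "f \<sigma> = (\<Sum>v\<in>V. v * indicator (Ev v) \<sigma>)" by simp
      qed
    qed
    have "(\<integral>\<sigma>. f \<sigma> \<partial>\<mu>) = (\<integral>\<sigma>. (\<Sum>v\<in>V. v * indicator (Ev v) \<sigma>) \<partial>\<mu>)"
      by (rule integral_cong_AE[OF fm' _ ae]) (use Ev_ev in auto)
    also have "\<dots> = (\<Sum>v\<in>V. (\<integral>\<sigma>. v * indicator (Ev v) \<sigma> \<partial>\<mu>))"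
      by (rule Bochner_Integration.integral_sum[where f="\<lambda>(v::real) (\<sigma>::config). v * (indicator (Ev v) \<sigma> :: real)" and I=V]) (use intE in auto)
    also have "\<dots> = (\<Sum>v\<in>V. v * measure \<mu> (Ev v))"
      by (rule sum.cong) (use Ev_ev sets.sets_into_space[OF Ev_ev] in \<open>auto simp: Int_absorb2\<close>)
    finally show ?thesis .
  qed
  have Bb_disj: "disjoint_family_on (Bb Q) (Pow ?Bd)"
    unfolding disjoint_family_on_def Bb_def by auto
  have OV_U: "OV Q = (\<Union>b\<in>Pow ?Bd. Bb Q b)"
  proof
    show "OV Q \<subseteq> (\<Union>b\<in>Pow ?Bd. Bb Q b)"
    proof
      fix \<sigma> assume s: "\<sigma> \<in> OV Q"
      then have "\<sigma> \<in> Bb Q {u \<in> ?Bd. \<sigma> u}" unfolding Bb_def by auto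
      moreover have "{u \<in> ?Bd. \<sigma> u} \<in> Pow ?Bd" by auto
      ultimately show "\<sigma> \<in> (\<Union>b\<in>Pow ?Bd. Bb Q b)" by blast
    qed
    show "(\<Union>b\<in>Pow ?Bd. Bb Q b) \<subseteq> OV Q" unfolding Bb_def by auto
  qed
  have sumB: "(\<Sum>b\<in>Pow ?Bd. measure \<mu> (Bb Q b)) = 1"
  proof -
    have "(\<Sum>b\<in>Pow ?Bd. measure \<mu> (Bb Q b)) = measure \<mu> (\<Union>b\<in>Pow ?Bd. Bb Q b)"
      by (rule P.finite_measure_finite_Union[symmetric]) (use finBd Bb_ev Bb_disj in auto)
    also have "\<dots> = measure \<mu> (OV Q)" using OV_U by simp
    also have "\<dots> = 1"
    proof (rule antisym)
      show "measure \<mu> (OV Q) \<le> 1" by (rule P.prob_le_1)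
      have "measure \<mu> Omega \<le> measure \<mu> (OV Q)" by (rule P.finite_measure_mono[OF Omega_OV OV_ev])
      then show "1 \<le> measure \<mu> (OV Q)" using mO by simp
    qed
    finally show ?thesis .
  qed
  have splitE: "measure \<mu> (Ev v) = (\<Sum>b\<in>Pow ?Bd. measure \<mu> (Ev v \<inter> Bb Q b))" for v
  proof -
    have "Ev v = (\<Union>b\<in>Pow ?Bd. Ev v \<inter> Bb Q b)"
      using OV_U Omega_OV[of Q] unfolding Ev_def by blast
    then have "measure \<mu> (Ev v) = measure \<mu> (\<Union>b\<in>Pow ?Bd. Ev v \<inter> Bb Q b)" by simp
    also have "\<dots> = (\<Sum>b\<in>Pow ?Bd. measure \<mu> (Ev v \<inter> Bb Q b))"
    proof (rule P.finite_measure_finite_Union)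
      show "disjoint_family_on (\<lambda>b. Ev v \<inter> Bb Q b) (Pow ?Bd)"
        using Bb_disj unfolding disjoint_family_on_def by blast
    qed (use finBd Bb_ev Ev_ev in auto)
    finally show ?thesis .
  qed
  define T where "T b = (\<Sum>v\<in>V. v * measure \<mu> (Ev v \<inter> Bb Q b))" for b
  have int_T: "(\<integral>\<sigma>. f \<sigma> \<partial>\<mu>) = (\<Sum>b\<in>Pow ?Bd. T b)"
  proof -
    have "(\<integral>\<sigma>. f \<sigma> \<partial>\<mu>) = (\<Sum>v\<in>V. \<Sum>b\<in>Pow ?Bd. v * measure \<mu> (Ev v \<inter> Bb Q b))"
      unfolding int_eq splitE by (simp add: sum_distrib_left)
    also have "\<dots> = (\<Sum>b\<in>Pow ?Bd. \<Sum>v\<in>V. v * measure \<mu> (Ev v \<inter> Bb Q b))" by (rule sum.swap)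
    finally show ?thesis unfolding T_def .
  qed
  have blocks: "\<exists>G. T b = G * measure \<mu> (Bb Q b) \<and> (measure \<mu> (Bb Q b) = 0 \<or> (\<exists>\<sigma>\<in>Omega. G = tmean lam Q \<sigma> f))"
    for b
  proof (cases "\<exists>\<sigma>b. \<sigma>b \<in> Bb Q b \<inter> Omega")
    case False
    then have sub: "Bb Q b \<subseteq> space \<mu> - Omega" using spc by auto
    have "measure \<mu> (Bb Q b) \<le> measure \<mu> (space \<mu> - Omega)" by (rule P.finite_measure_mono[OF sub]) (use O_ev in auto)
    also have "\<dots> = 0" using P.prob_compl[OF O_ev] mO by simp
    finally have z: "measure \<mu> (Bb Q b) = 0" by (simp add: measure_nonneg antisym)
    have "measure \<mu> (Ev v \<inter> Bb Q b) = 0" for v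
    proof -
      have "measure \<mu> (Ev v \<inter> Bb Q b) \<le> measure \<mu> (Bb Q b)" by (rule P.finite_measure_mono) (use Bb_ev in auto)
      then show ?thesis using z by (simp add: measure_nonneg antisym)
    qed
    then have "T b = 0" unfolding T_def by simp
    then show ?thesis using z by auto
  next
    case True
    then obtain \<sigma>b where sb: "\<sigma>b \<in> Bb Q b" "\<sigma>b \<in> Omega" by blast
    have blE: "boxlocal Q (indicator (Ev v))" for v
      unfolding boxlocal_def
    proof (intro ballI impI)
      fix \<eta> \<eta>' assume e: "\<eta> \<in> Omega" "\<eta>' \<in> Omega" and a: "\<forall>u\<in>sbox Q. \<eta> u = \<eta>' u"
      have "f \<eta> = f \<eta>'" by (rule bl[unfolded boxlocal_def, rule_format, OF e]) (use a in blast)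
      then show "(indicator (Ev v) \<eta> :: real) = indicator (Ev v) \<eta>'" using e by (simp add: Ev_def indicator_def)
    qed
    have inv: "spec lam ?A \<sigma> (Ev v) = tmean lam Q \<sigma>b (indicator (Ev v))" if s: "\<sigma> \<in> Bb Q b" for \<sigma> v
    proof -
      have "\<sigma> \<in> OV Q" "\<sigma>b \<in> OV Q" using s sb unfolding Bb_def by auto
      moreover have "\<forall>u\<in>?Bd. \<sigma> u = \<sigma>b u" using s sb unfolding Bb_def by auto
      ultimately show ?thesis unfolding spec_eq by (rule tmean_inv[OF _ _ _ blE])
    qed
    have mE: "measure \<mu> (Ev v \<inter> Bb Q b) = tmean lam Q \<sigma>b (indicator (Ev v)) * measure \<mu> (Bb Q b)" for v
    proof -
      have "measure \<mu> (Ev v \<inter> Bb Q b) = (\<integral>\<sigma>. indicator (Bb Q b) \<sigma> * spec lam ?A \<sigma> (Ev v) \<partial>\<mu>)"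
        by (rule dlr[OF bounded_rect Ev_sets outside_Bb])
      also have "\<dots> = (\<integral>\<sigma>. tmean lam Q \<sigma>b (indicator (Ev v)) * indicator (Bb Q b) \<sigma> \<partial>\<mu>)"
        by (rule Bochner_Integration.integral_cong[OF refl]) (auto simp: indicator_def inv)
      also have "\<dots> = tmean lam Q \<sigma>b (indicator (Ev v)) * measure \<mu> (Bb Q b)"
        using sets.sets_into_space[OF Bb_ev] by (simp add: Int_absorb2)
      finally show ?thesis .
    qed
    have "T b = (\<Sum>v\<in>V. v * tmean lam Q \<sigma>b (indicator (Ev v))) * measure \<mu> (Bb Q b)"
      unfolding T_def mE sum_distrib_right by (rule sum.cong) (simp_all add: mult_ac)
    also have "(\<Sum>v\<in>V. v * tmean lam Q \<sigma>b (indicator (Ev v))) = tmean lam Q \<sigma>b (\<lambda>\<eta>. \<Sum>v\<in>V. v * indicator (Ev v) \<eta>)"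
      unfolding tmean_def by (rule wmean_sum[OF finV, symmetric])
    also have "\<dots> = tmean lam Q \<sigma>b f"
      unfolding tmean_def
    proof (rule wmean_cong[OF refl])
      fix \<eta> assume e: "\<eta> \<in> Omega_bc (rect_set Q) \<sigma>b"
      then have eO: "\<eta> \<in> Omega" by (rule Omega_bc_O)
      have "(\<Sum>v\<in>V. v * indicator (Ev v) \<eta>) = (\<Sum>v\<in>V. if v = f \<eta> then v else 0)"
        by (rule sum.cong) (auto simp: Ev_def eO indicator_def)
      also have "\<dots> = f \<eta>" using finV eO unfolding V_def by (simp add: sum.delta')
      finally show "(\<Sum>v\<in>V. v * indicator (Ev v) \<eta>) = f \<eta>" .
    qed
    finally show ?thesis using sb(2) by blast
  qed
  have mnn: "measure \<mu> (Bb Q b) \<ge> 0" for b by simp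
  show "m \<le> (\<integral>\<sigma>. f \<sigma> \<partial>\<mu>)" if lb: "\<forall>\<sigma>\<in>Omega. m \<le> tmean lam Q \<sigma> f"
  proof -
    have "m * measure \<mu> (Bb Q b) \<le> T b" for b
    proof -
      obtain G where G: "T b = G * measure \<mu> (Bb Q b)" "measure \<mu> (Bb Q b) = 0 \<or> (\<exists>\<sigma>\<in>Omega. G = tmean lam Q \<sigma> f)"
        using blocks[of b] by blast
      show ?thesis
      proof (cases "measure \<mu> (Bb Q b) = 0")
        case True then show ?thesis using G by simp
      next
        case False
        then obtain \<sigma> where "\<sigma> \<in> Omega" "G = tmean lam Q \<sigma> f" using G by blast
        then have "m \<le> G" using lb by blast
        then show ?thesis unfolding G(1) by (rule mult_right_mono) (rule mnn)
      qed
    qed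
    then have "(\<Sum>b\<in>Pow ?Bd. m * measure \<mu> (Bb Q b)) \<le> (\<Sum>b\<in>Pow ?Bd. T b)" by (rule sum_mono)
    then show ?thesis unfolding int_T by (simp add: sum_distrib_left[symmetric] sumB)
  qed
  show "(\<integral>\<sigma>. f \<sigma> \<partial>\<mu>) \<le> M" if ub: "\<forall>\<sigma>\<in>Omega. tmean lam Q \<sigma> f \<le> M"
  proof -
    have "T b \<le> M * measure \<mu> (Bb Q b)" for b
    proof -
      obtain G where G: "T b = G * measure \<mu> (Bb Q b)" "measure \<mu> (Bb Q b) = 0 \<or> (\<exists>\<sigma>\<in>Omega. G = tmean lam Q \<sigma> f)"
        using blocks[of b] by blast
      show ?thesis
      proof (cases "measure \<mu> (Bb Q b) = 0")
        case True then show ?thesis using G by simp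
      next
        case False
        then obtain \<sigma> where "\<sigma> \<in> Omega" "G = tmean lam Q \<sigma> f" using G by blast
        then have "G \<le> M" using ub by blast
        then show ?thesis unfolding G(1) by (rule mult_right_mono) (rule mnn)
      qed
    qed
    then have "(\<Sum>b\<in>Pow ?Bd. T b) \<le> (\<Sum>b\<in>Pow ?Bd. M * measure \<mu> (Bb Q b))" by (rule sum_mono)
    then show ?thesis unfolding int_T by (simp add: sum_distrib_left[symmetric] sumB)
  qed
qed



lemma ring_card:
  assumes R': "R' = (x',y',K',L')" and pos: "K' > 0" "L' > 0"
  shows "card (ring R') \<le> nat (6*K' + 6*L' + 36)"
proof -
  define S1 where "S1 = {x'-1..x'+1} \<times> {y'-1..y'+L'+1}"
  define S2 where "S2 = {x'+K'-1..x'+K'+1} \<times> {y'-1..y'+L'+1}"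
  define S3 where "S3 = {x'-1..x'+K'+1} \<times> {y'-1..y'+1}"
  define S4 where "S4 = {x'-1..x'+K'+1} \<times> {y'+L'-1..y'+L'+1}"
  have sub: "ring R' \<subseteq> S1 \<union> S2 \<union> S3 \<union> S4"
  proof
    fix u assume "u \<in> ring R'"
    then have a: "x'-1 \<le> fst u" "fst u \<le> x'+K'+1" "y'-1 \<le> snd u" "snd u \<le> y'+L'+1"
      and b: "\<not> (x'+2 \<le> fst u \<and> fst u \<le> x'+K'-2 \<and> y'+2 \<le> snd u \<and> snd u \<le> y'+L'-2)"
      unfolding ring_def expd_def core_def R' by auto
    show "u \<in> S1 \<union> S2 \<union> S3 \<union> S4"
    proof (cases "fst u \<le> x'+1")
      case True then show ?thesis using a by (cases u) (auto simp: S1_def)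
    next
      case F1: False
      show ?thesis
      proof (cases "fst u \<ge> x'+K'-1")
        case True then show ?thesis using a by (cases u) (auto simp: S2_def)
      next
        case F2: False
        show ?thesis
        proof (cases "snd u \<le> y'+1")
          case True then show ?thesis using a by (cases u) (auto simp: S3_def)
        next
          case False
          then have "snd u \<ge> y'+L'-1" using b F1 F2 by linarith
          then show ?thesis using a by (cases u) (auto simp: S4_def)
        qed
      qed
    qed
  qed
  have c1: "card S1 = 3 * nat (L'+3)" "card S2 = 3 * nat (L'+3)"
    "card S3 = nat (K'+3) * 3" "card S4 = nat (K'+3) * 3"
    unfolding S1_def S2_def S3_def S4_def by (simp_all add: card_cartesian_product)
  have fin: "finite S1" "finite S2" "finite S3" "finite S4" unfolding S1_def S2_def S3_def S4_def by auto
  have "card (ring R') \<le> card (S1 \<union> S2 \<union> S3 \<union> S4)" by (rule card_mono) (use fin sub in auto)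
  also have "\<dots> \<le> card S1 + card S2 + card S3 + card S4"
    by (meson add_mono_thms_linordered_semiring(3) card_Un_le order_trans)
  also have "\<dots> = nat (6*K' + 6*L' + 36)" unfolding c1 using pos by (simp add: nat_add_distrib nat_mult_distrib)
  finally show ?thesis .
qed

lemma dist_h: "dist (a::real, c::real) (b, c) = \<bar>a - b\<bar>"
  by (simp add: dist_Pair_Pair dist_real_def)
lemma dist_v: "dist (c::real, a::real) (c, b) = \<bar>a - b\<bar>"
  by (simp add: dist_Pair_Pair dist_real_def)

lemma setdist_margin:
  assumes R: "R = (x,y,K,L)" and R': "R' = (x',y',K',L')" and pos: "K' > 0" "L' > 0"
    and sub: "rect_set R' \<subseteq> rect_set R" and sd: "setdist (rect_set R') (- rect_set R) \<ge> 2"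
  shows "margin R R'"
proof -
  let ?r = "real_of_int"
  have p1: "(?r x', ?r y') \<in> rect_set R'" and p2: "(?r (x'+K'), ?r y') \<in> rect_set R'"
    and p3: "(?r x', ?r (y'+L')) \<in> rect_set R'" and p4: "(?r (x'+K'), ?r (y'+L')) \<in> rect_set R'"
    using pos unfolding R' rect_set_def by auto
  have in1: "(?r x', ?r y') \<in> rect_set R" "(?r (x'+K'), ?r (y'+L')) \<in> rect_set R"
    using subsetD[OF sub p1] subsetD[OF sub p4] by auto
  then have c: "x \<le> x'" "y \<le> y'" "x'+K' \<le> x+K" "y'+L' \<le> y+L" unfolding R rect_set_def by auto
  have key: "2 \<le> dist p q" if "p \<in> rect_set R'" "q \<in> - rect_set R" for p q
    using setdist_le_dist[OF that] sd by linarith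
  have q1: "(?r x - 1/2, ?r y') \<in> - rect_set R" unfolding R rect_set_def by auto
  have q2: "(?r (x+K) + 1/2, ?r y') \<in> - rect_set R" unfolding R rect_set_def by auto
  have q3: "(?r x', ?r y - 1/2) \<in> - rect_set R" unfolding R rect_set_def by auto
  have q4: "(?r x', ?r (y+L) + 1/2) \<in> - rect_set R" unfolding R rect_set_def by auto
  have "2 \<le> \<bar>?r x' - (?r x - 1/2)\<bar>" using key[OF p1 q1] by (simp add: dist_h)
  then have "x + 2 \<le> x'" using c by linarith
  moreover have "2 \<le> \<bar>?r (x'+K') - (?r (x+K) + 1/2)\<bar>" using key[OF p2 q2] by (simp only: dist_h)
  then have "x' + K' + 2 \<le> x + K" using c by linarith
  moreover have "2 \<le> \<bar>?r y' - (?r y - 1/2)\<bar>" using key[OF p1 q3] by (simp add: dist_v)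
  then have "y + 2 \<le> y'" using c by linarith
  moreover have "2 \<le> \<bar>?r (y'+L') - (?r (y+L) + 1/2)\<bar>" using key[OF p3 q4] by (simp only: dist_v)
  then have "y' + L' + 2 \<le> y + L" using c by linarith
  ultimately show ?thesis unfolding R R' margin_def by simp
qed

lemma boxlocal_of_local:
  assumes "is_local (rect_set R') f" "sbox R' \<subseteq> sbox R"
  shows "boxlocal R f"
  unfolding boxlocal_def
proof (intro ballI impI)
  fix \<sigma> \<sigma>' assume s: "\<sigma> \<in> Omega" "\<sigma>' \<in> Omega" and a: "\<forall>u\<in>sbox R. \<sigma> u = \<sigma>' u"
  have "\<forall>v. pt v \<in> rect_set R' \<longrightarrow> \<sigma> v = \<sigma>' v"
    using a assms(2) unfolding pt_in_rect by blast
  then show "f \<sigma> = f \<sigma>'" using assms(1) s unfolding is_local_def by blast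
qed

lemma tmean_nonneg:
  assumes "lam > 0" "\<forall>\<sigma>\<in>Omega. f \<sigma> \<ge> 0"
  shows "tmean lam R \<rho> f \<ge> 0"
  unfolding tmean_def wmean_def
proof (rule divide_nonneg_nonneg)
  show "0 \<le> (\<Sum>\<sigma>\<in>Omega_bc (rect_set R) \<rho>. tw lam R \<sigma> * f \<sigma>)"
  proof (rule sum_nonneg)
    fix \<sigma> assume "\<sigma> \<in> Omega_bc (rect_set R) \<rho>"
    then have "f \<sigma> \<ge> 0" using assms(2) Omega_bc_O by blast
    moreover have "tw lam R \<sigma> \<ge> 0" using tw_pos[OF assms(1), of R \<sigma>] by simp
    ultimately show "0 \<le> tw lam R \<sigma> * f \<sigma>" by simp
  qed
  show "0 \<le> (\<Sum>\<sigma>\<in>Omega_bc (rect_set R) \<rho>. tw lam R \<sigma>)"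
    using tw_pos[OF assms(1), of R] by (intro sum_nonneg) (simp add: less_imp_le)
qed



lemma main_step:
  fixes lam :: real
  assumes lam: "lam > 0"
    and R: "R = (x,y,K,L)" and R': "R' = (x',y',K',L')"
    and rR: "is_rect R" and rR': "is_rect R'" and sub: "rect_set R' \<subseteq> rect_set R"
    and sd: "setdist (rect_set R') (- rect_set R) \<ge> 2"
    and fm: "f \<in> borel_measurable cfg_space" and fpos: "\<forall>\<sigma>\<in>Omega. f \<sigma> \<ge> 0"
    and loc: "is_local (rect_set R') f"
    and E: "E \<in> admissible_means lam R" and E': "E' \<in> admissible_means lam R'"
  shows "E' f \<le> (1 / (((min lam (1/lam))^2/2)^3)) ^ nat (perimeter R) * E f"
proof -
  define q where "q = min lam (1/lam)"
  define d where "d = q^2/2"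
  define P where "P = nat (perimeter R)"
  define r where "r = card (ring R')"
  have qpos: "q > 0" using lam by (simp add: q_def)
  have q1: "q \<le> 1"
  proof (cases "lam \<le> 1")
    case True then show ?thesis by (simp add: q_def min_le_iff_disj)
  next
    case False then have "1/lam \<le> 1" by simp
    then show ?thesis by (simp add: q_def min_le_iff_disj)
  qed
  have dpos: "d > 0" using qpos by (simp add: d_def)
  have d1: "d \<le> 1"
  proof -
    have "q^2 \<le> 1" using qpos q1 by (simp add: power_le_one)
    then show ?thesis by (simp add: d_def)
  qed
  have KL: "K' > 0" "L' > 0" using rR' R' by (auto simp: is_rect_def)
  have m: "margin R R'" by (rule setdist_margin[OF R R' KL sub sd])
  have mg: "x+2 \<le> x'" "x'+K'+2 \<le> x+K" "y+2 \<le> y'" "y'+L'+2 \<le> y+L" using m R R' by (auto simp: margin_def)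
  have rle: "r \<le> 3 * P"
  proof -
    have "r \<le> nat (6*K' + 6*L' + 36)" unfolding r_def by (rule ring_card[OF R' KL])
    also have "\<dots> \<le> 3 * P" unfolding P_def perimeter_def width_def height_def R using mg KL by simp
    finally show ?thesis .
  qed
  have sbsub: "sbox R' \<subseteq> sbox R" using mg R R' by (auto simp: sbox_def)
  have blR: "boxlocal R f" by (rule boxlocal_of_local[OF loc sbsub])
  have blR': "boxlocal R' f" by (rule boxlocal_of_local[OF loc order_refl])
  have LB: "d^r * tmean lam R' \<rho>2 f \<le> E f" if r2: "\<rho>2 \<in> Omega" for \<rho>2
  proof -
    let ?m = "d^r * tmean lam R' \<rho>2 f"
    have pm: "?m \<le> tmean lam R \<rho> f" if "\<rho> \<in> Omega" for \<rho>
      unfolding d_def q_def r_def by (rule pair_main[OF lam m that r2 loc fpos])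
    have "E = per_mean lam R \<or> (\<exists>\<rho>\<in>Omega. E = bc_mean lam R \<rho>) \<or> (\<exists>\<mu>. gibbs lam \<mu> \<and> E = (\<lambda>f. \<integral>\<sigma>. f \<sigma> \<partial>\<mu>))"
      using E unfolding admissible_means_def by blast
    then show ?thesis
    proof (elim disjE exE conjE bexE)
      assume e: "E = per_mean lam R"
      show ?thesis unfolding e
        by (rule per_mix(1)[OF rR lam blR]) (simp add: bc_mean_eq[OF lam] pm)
    next
      fix \<rho> assume "\<rho> \<in> Omega" "E = bc_mean lam R \<rho>"
      then show ?thesis using pm bc_mean_eq[OF lam] by simp
    next
      fix \<mu> assume g: "gibbs lam \<mu>" and e: "E = (\<lambda>f. \<integral>\<sigma>. f \<sigma> \<partial>\<mu>)"
      show ?thesis unfolding e using gibbs_bounds(1)[OF lam g fm blR] pm by blast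
    qed
  qed
  define M where "M = (1 / (d^3)) ^ P * E f"
  have dP: "(d^3)^P \<le> d^r"
  proof -
    have "d^(3*P) \<le> d^r" using dpos d1 rle by (intro power_decreasing) auto
    then show ?thesis by (simp add: power_mult)
  qed
  have UBt: "tmean lam R' \<rho>2 f \<le> M" if r2: "\<rho>2 \<in> Omega" for \<rho>2
  proof -
    have tn: "tmean lam R' \<rho>2 f \<ge> 0" by (rule tmean_nonneg[OF lam fpos])
    have "(d^3)^P * tmean lam R' \<rho>2 f \<le> d^r * tmean lam R' \<rho>2 f" by (rule mult_right_mono[OF dP tn])
    also have "\<dots> \<le> E f" by (rule LB[OF r2])
    finally have "(d^3)^P * tmean lam R' \<rho>2 f \<le> E f" .
    moreover have "(d^3)^P > 0" using dpos by simp
    ultimately show ?thesis unfolding M_def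
      by (simp add: power_one_over field_simps)
  qed
  have "E' = per_mean lam R' \<or> (\<exists>\<rho>\<in>Omega. E' = bc_mean lam R' \<rho>) \<or> (\<exists>\<mu>. gibbs lam \<mu> \<and> E' = (\<lambda>f. \<integral>\<sigma>. f \<sigma> \<partial>\<mu>))"
    using E' unfolding admissible_means_def by blast
  then have "E' f \<le> M"
  proof (elim disjE exE conjE bexE)
    assume e: "E' = per_mean lam R'"
    show ?thesis unfolding e
      by (rule per_mix(2)[OF rR' lam blR']) (simp add: bc_mean_eq[OF lam] UBt)
  next
    fix \<rho> assume "\<rho> \<in> Omega" "E' = bc_mean lam R' \<rho>"
    then show ?thesis using UBt bc_mean_eq[OF lam] by simp
  next
    fix \<mu> assume g: "gibbs lam \<mu>" and e: "E' = (\<lambda>f. \<integral>\<sigma>. f \<sigma> \<partial>\<mu>)"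
    show ?thesis unfolding e using gibbs_bounds(2)[OF lam g fm blR'] UBt by blast
  qed
  then show ?thesis unfolding M_def d_def q_def P_def .
qed

theorem proposition2p2:
  fixes lam :: real
  assumes "lam > 0"
  shows "\<exists>C::real. \<forall>R R' f.
    is_rect R \<and> is_rect R' \<and> rect_set R' \<subseteq> rect_set R \<and>
    setdist (rect_set R') (- rect_set R) \<ge> 2 \<and>
    f \<in> borel_measurable cfg_space \<and> (\<forall>\<sigma>\<in>Omega. f \<sigma> \<ge> 0) \<and> is_local (rect_set R') f \<longrightarrow>
    (\<forall>E \<in> admissible_means lam R. \<forall>E' \<in> admissible_means lam R'.
        E' f \<le> C ^ nat (perimeter R) * E f)"
proof (rule exI[of _ "1 / (((min lam (1/lam))^2/2)^3)"], intro allI impI ballI)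
  fix R R' f E E'
  assume H: "is_rect R \<and> is_rect R' \<and> rect_set R' \<subseteq> rect_set R \<and>
    setdist (rect_set R') (- rect_set R) \<ge> 2 \<and>
    f \<in> borel_measurable cfg_space \<and> (\<forall>\<sigma>\<in>Omega. f \<sigma> \<ge> 0) \<and> is_local (rect_set R') f"
    and E: "E \<in> admissible_means lam R" and E': "E' \<in> admissible_means lam R'"
  obtain x y K L where R: "R = (x,y,K,L)" by (cases R)
  obtain x' y' K' L' where R': "R' = (x',y',K',L')" by (cases R')
  show "E' f \<le> (1 / (((min lam (1/lam))^2/2)^3)) ^ nat (perimeter R) * E f"
    using main_step[OF assms R R' _ _ _ _ _ _ _ E E'] H by blast
qed


end
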